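(* Let $\Lambda=kQ/I(n;n',n'';V)$, $m=\min(n',n'')$, $d=\dim_kV/(\beta^m)$. If either $d\le 2\le m$, or $d>2$ and $d+\frac{2}{d-2}>m-2$, then $\mathcal D'(\Lambda)\ne 0$ and hence $\dim_k\mathrm{HH}^1(\Lambda)>n-m+c\ge 0$; in particular $\mathrm{HH}^1(\Lambda)\neq 0$.
   Context: $k$ is a field; $Q$ is the quiver with vertices $1,2,3$ and arrows $\alpha\colon 2\to1$, $\beta\colon 2\to 2$, $\gamma\colon 3\to 2$; $kQ$ is generated by pairwise orthogonal idempotents $e_1,e_2,e_3$ (sum $1$) and $\alpha,\beta,\gamma$ with $e_1\alpha=\alpha=\alpha e_2$, $e_2\beta=\beta=\beta e_2$, $e_3\gamma=\gamma=\gamma e_2$, $\gamma\alpha=\beta\alpha=\gamma\beta=0$; for $v=\sum_iv_i\beta^i\in k[\beta]$, $\alpha v\gamma=\sum_iv_i\alpha\beta^i\gamma$. For integers $n\ge 2$, $1\le n',n''\le n$, $m=\min(n',n'')$ and a $k$-subspace $V\subseteq k[\beta]$ containing $(\beta^m)$, $I(n;n',n'';V)$ is the two-sided ideal of $kQ$ generated by $\alpha\beta^{n'}$, $\beta^n$, $\beta^{n''}\gamma$ and all $\alpha v\gamma$, $v\in V$. $\delta=\gcd(n,n',n'')$; $c=1$ if $\delta=0$ in $k$, $c=0$ otherwise. $\mathcal D'(\Lambda)$ is the quotient of $\{\Theta=A+B\frac{d}{d\beta}: A,B\in k[\beta],\ B(0)=0,\ \Theta(V)\subseteq V\}$ (operators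 acting by $v\mapsto Av+Bv'$) by $\{A+B\frac{d}{d\beta}: A\in k+(\beta^m),\ B\in(\beta^m)\}$. $\mathrm{HH}^1(\Lambda)=\mathrm{Der}_k(\Lambda,\Lambda)/\mathrm{Inn}(\Lambda)$. *)

theory Defs
  imports "HOL-Computational_Algebra.Polynomial"
begin

section \<open>The quiver Q and its path algebra kQ\<close>

datatype vert = V1 | V2 | V3
datatype arr = Al | Be | Ga   (* alpha : 2 -> 1, beta : 2 -> 2, gamma : 3 -> 2 *)

fun asrc :: "arr \<Rightarrow> vert" where
  "asrc Al = V2" | "asrc Be = V2" | "asrc Ga = V3"
fun atgt :: "arr \<Rightarrow> vert" where
  "atgt Al = V1" | "atgt Be = V2" | "atgt Ga = V2"

text \<open>A path is a pair (v, [a1,...,ar]) standing for the product a1 a2 ... ar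
  (with e_t a1 = a1, ar e_v = ar); the empty list stands for the idempotent e_v.
  Multiplication convention as in the paper: e1 alpha = alpha = alpha e2, so a word
  a1 a2 is nonzero iff source(a1) = target(a2).\<close>

type_synonym path = "vert \<times> arr list"

fun chain :: "arr list \<Rightarrow> bool" where
  "chain [] = True"
| "chain [a] = True"
| "chain (a # b # ws) = (asrc a = atgt b \<and> chain (b # ws))"

definition valid_path :: "path \<Rightarrow> bool" where
  "valid_path p = (chain (snd p) \<and> (snd p \<noteq> [] \<longrightarrow> asrc (last (snd p)) = fst p))"

definition psrc :: "path \<Rightarrow> vert" where
  "psrc p = fst p"

definition ptgt :: "path \<Rightarrow> vert" where
  "ptgt p = (if snd p = [] then fst p else atgt (hd (snd p)))"

text \<open>Elements of kQ: finitely supported k-valued functions on valid paths.\<close>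
type_synonym 'a kqel = "path \<Rightarrow> 'a"

definition kQ :: "('a::field) kqel set" where
  "kQ = {f. finite {p. f p \<noteq> 0} \<and> (\<forall>p. f p \<noteq> 0 \<longrightarrow> valid_path p)}"

definition kq_add :: "('a::field) kqel \<Rightarrow> 'a kqel \<Rightarrow> 'a kqel" where
  "kq_add f g = (\<lambda>p. f p + g p)"

definition kq_diff :: "('a::field) kqel \<Rightarrow> 'a kqel \<Rightarrow> 'a kqel" where
  "kq_diff f g = (\<lambda>p. f p - g p)"

definition kq_smult :: "'a::field \<Rightarrow> 'a kqel \<Rightarrow> 'a kqel" where
  "kq_smult c f = (\<lambda>p. c * f p)"

definition kq_mult :: "('a::field) kqel \<Rightarrow> 'a kqel \<Rightarrow> 'a kqel" where
  "kq_mult f g = (\<lambda>p. \<Sum>q\<in>{q. f q \<noteq> 0}. \<Sum>r\<in>{r. g r \<noteq> 0}.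
      (if psrc q = ptgt r \<and> (fst r, snd q @ snd r) = p then f q * g r else 0))"

definition kq_path :: "path \<Rightarrow> ('a::field) kqel" where
  "kq_path p = (\<lambda>q. if q = p then 1 else 0)"

definition alpha :: "('a::field) kqel" where "alpha = kq_path (V2, [Al])"
definition gamma :: "('a::field) kqel" where "gamma = kq_path (V3, [Ga])"
definition bpow :: "nat \<Rightarrow> ('a::field) kqel" where
  "bpow i = kq_path (V2, replicate i Be)"   (* beta^0 = e2 *)

text \<open>The element v(beta) = sum_i v_i beta^i of kQ for v in k[beta].\<close>
definition embed :: "('a::field) poly \<Rightarrow> 'a kqel" where
  "embed v = (\<lambda>p. if fst p = V2 \<and> (\<forall>a\<in>set (snd p). a = Be)
                  then coeff v (length (snd p)) else 0)"

text \<open>Two-sided ideal of kQ generated by a set S.\<close>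
inductive_set kq_ideal :: "('a::field) kqel set \<Rightarrow> 'a kqel set" for S where
  gen: "s \<in> S \<Longrightarrow> s \<in> kq_ideal S"
| zero: "(\<lambda>p. 0) \<in> kq_ideal S"
| add: "x \<in> kq_ideal S \<Longrightarrow> y \<in> kq_ideal S \<Longrightarrow> kq_add x y \<in> kq_ideal S"
| lmult: "a \<in> kQ \<Longrightarrow> x \<in> kq_ideal S \<Longrightarrow> kq_mult a x \<in> kq_ideal S"
| rmult: "a \<in> kQ \<Longrightarrow> x \<in> kq_ideal S \<Longrightarrow> kq_mult x a \<in> kq_ideal S"

text \<open>I(n;n',n'';V).\<close>
definition I_ideal :: "nat \<Rightarrow> nat \<Rightarrow> nat \<Rightarrow> ('a::field) poly set \<Rightarrow> 'a kqel set" where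
  "I_ideal n n' n'' V = kq_ideal
     ({kq_mult alpha (bpow n'), bpow n, kq_mult (bpow n'') gamma}
      \<union> {kq_mult alpha (kq_mult (embed v) gamma) | v. v \<in> V})"

section \<open>Derivations of Lambda = kQ/I, represented through lifts to kQ\<close>

text \<open>A k-linear derivation of kQ/I is given by a map D on kQ which is well defined
  modulo I, k-linear modulo I and satisfies the Leibniz rule modulo I.\<close>
definition is_lam_der :: "('a::field) kqel set \<Rightarrow> ('a kqel \<Rightarrow> 'a kqel) \<Rightarrow> bool" where
  "is_lam_der I D \<longleftrightarrow>
     (\<forall>x\<in>kQ. D x \<in> kQ) \<and>
     (\<forall>x\<in>kQ. \<forall>y\<in>kQ. kq_diff x y \<in> I \<longrightarrow> kq_diff (D x) (D y) \<in> I) \<and>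
     (\<forall>x\<in>kQ. \<forall>y\<in>kQ. kq_diff (D (kq_add x y)) (kq_add (D x) (D y)) \<in> I) \<and>
     (\<forall>c. \<forall>x\<in>kQ. kq_diff (D (kq_smult c x)) (kq_smult c (D x)) \<in> I) \<and>
     (\<forall>x\<in>kQ. \<forall>y\<in>kQ. kq_diff (D (kq_mult x y))
                               (kq_add (kq_mult (D x) y) (kq_mult x (D y))) \<in> I)"

text \<open>Inner derivation [a,-] of kQ/I (equality modulo I).\<close>
definition is_lam_inner :: "('a::field) kqel set \<Rightarrow> ('a kqel \<Rightarrow> 'a kqel) \<Rightarrow> bool" where
  "is_lam_inner I D \<longleftrightarrow>
     (\<exists>a\<in>kQ. \<forall>x\<in>kQ. kq_diff (D x) (kq_diff (kq_mult a x) (kq_mult x a)) \<in> I)"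

text \<open>dim_k HH^1(kQ/I) > N: there are N+1 derivations linearly independent modulo Inn.\<close>
definition hh1_dim_gt :: "('a::field) kqel set \<Rightarrow> nat \<Rightarrow> bool" where
  "hh1_dim_gt I N \<longleftrightarrow>
     (\<exists>Ds :: nat \<Rightarrow> ('a kqel \<Rightarrow> 'a kqel).
        (\<forall>i\<le>N. is_lam_der I (Ds i)) \<and>
        (\<forall>cs :: nat \<Rightarrow> 'a. is_lam_inner I (\<lambda>x p. \<Sum>i\<le>N. cs i * Ds i x p)
                             \<longrightarrow> (\<forall>i\<le>N. cs i = 0)))"

text \<open>HH^1(kQ/I) \<noteq> 0.\<close>
definition hh1_nonzero :: "('a::field) kqel set \<Rightarrow> bool" where
  "hh1_nonzero I \<longleftrightarrow> (\<exists>D. is_lam_der I D \<and> \<not> is_lam_inner I D)"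

section \<open>Data in k[beta]\<close>

definition poly_subspace :: "('a::field) poly set \<Rightarrow> bool" where
  "poly_subspace V \<longleftrightarrow> 0 \<in> V \<and> (\<forall>x\<in>V. \<forall>y\<in>V. x + y \<in> V) \<and> (\<forall>c. \<forall>x\<in>V. smult c x \<in> V)"

text \<open>r elements of V linearly independent modulo the ideal (beta^m).\<close>
definition indep_mod :: "('a::field) poly set \<Rightarrow> nat \<Rightarrow> nat \<Rightarrow> bool" where
  "indep_mod V m r \<longleftrightarrow> (\<exists>ps. length ps = r \<and> set ps \<subseteq> V \<and>
     (\<forall>cs::'a list. length cs = r \<longrightarrow> monom 1 m dvd (\<Sum>i<r. smult (cs ! i) (ps ! i))
                       \<longrightarrow> (\<forall>i<r. cs ! i = 0)))"

text \<open>dim_k V/(beta^m).\<close>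
definition quot_dim :: "('a::field) poly set \<Rightarrow> nat \<Rightarrow> nat" where
  "quot_dim V m = (GREATEST r. indep_mod V m r)"

text \<open>D'(Lambda) \<noteq> 0: some Theta = A + B d/dbeta with B(0)=0, Theta(V) \<subseteq> V, is not in
  the subspace {A + B d/dbeta : A \<in> k + (beta^m), B \<in> (beta^m)}.\<close>
definition Dprime_nonzero :: "('a::field) poly set \<Rightarrow> nat \<Rightarrow> bool" where
  "Dprime_nonzero V m \<longleftrightarrow> (\<exists>A B :: 'a poly. coeff B 0 = 0 \<and>
      (\<forall>v\<in>V. A * v + B * pderiv v \<in> V) \<and>
      \<not> ((\<exists>c. monom 1 m dvd (A - [:c:])) \<and> monom 1 m dvd B))"

end

theory Submission
  imports Defs "HOL-Library.Product_Plus"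
begin

(* ===== part P1 ===== *)


section \<open>Shapes of paths\<close>

lemma chain_shape:
  "chain w \<Longrightarrow> \<exists>a k g. w = (if a then [Al] else []) @ replicate k Be @ (if g then [Ga] else [])"
proof (induction w rule: chain.induct)
  case 1
  then show ?case by (intro exI[of _ False] exI[of _ 0]) simp
next
  case (2 a)
  show ?case
  proof (cases a)
    case Al then show ?thesis by (intro exI[of _ True] exI[of _ 0] exI[of _ False]) simp
  next
    case Be then show ?thesis by (intro exI[of _ False] exI[of _ 1] exI[of _ False]) simp
  next
    case Ga then show ?thesis by (intro exI[of _ False] exI[of _ 0] exI[of _ True]) simp
  qed
next
  case (3 a b ws)
  then have src: "asrc a = atgt b" and ch: "chain (b # ws)" by auto
  from 3(1)[OF ch] obtain a' k g where e: "b # ws = (if a' then [Al] else []) @ replicate k Be @ (if g then [Ga] else [])"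
    by blast
  have na': "\<not> a'"
  proof
    assume a' then have "b = Al" using e by simp
    then show False using src by (cases a) auto
  qed
  show ?case
  proof (cases a)
    case Al
    then show ?thesis using e na' by (intro exI[of _ True] exI[of _ k] exI[of _ g]) simp
  next
    case Be
    then show ?thesis using e na' by (intro exI[of _ False] exI[of _ "Suc k"] exI[of _ g]) simp
  next
    case Ga
    then have "atgt b = V3" using src by simp
    then show ?thesis by (cases b) auto
  qed
qed

lemma chain_rep: "chain (replicate k Be)"
  by (induction k) (auto, case_tac k, auto)

lemma chain_rep_Ga: "chain (replicate k Be @ [Ga])"
  by (induction k) (auto, case_tac k, auto)

lemma chain_Al_rep: "chain (Al # replicate k Be)"
  using chain_rep[of k] by (cases k) auto

lemma chain_Al_rep_Ga: "chain (Al # replicate k Be @ [Ga])"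
  using chain_rep_Ga[of k] by (cases k) auto

lemma valid_cases:
  assumes "valid_path p"
  shows "p = (V1,[]) \<or> p = (V3,[]) \<or> (\<exists>k. p = (V2, replicate k Be)) \<or> (\<exists>k. p = (V2, Al # replicate k Be))
     \<or> (\<exists>k. p = (V3, replicate k Be @ [Ga])) \<or> (\<exists>k. p = (V3, Al # replicate k Be @ [Ga]))"
proof -
  obtain v w where p: "p = (v, w)" by force
  have ch: "chain w" and l: "w \<noteq> [] \<Longrightarrow> asrc (last w) = v" using assms p by (auto simp: valid_path_def)
  from chain_shape[OF ch] obtain a k g where e: "w = (if a then [Al] else []) @ replicate k Be @ (if g then [Ga] else [])"
    by blast
  show ?thesis
  proof (cases "w = []")
    case True
    then show ?thesis using p by (cases v) (auto intro: exI[of _ 0])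
  next
    case False
    note lw = l[OF False]
    show ?thesis
    proof (cases g)
      case True
      then have "v = V3" using lw e by simp
      then show ?thesis using p e True by (cases a) auto
    next
      case gF: False
      show ?thesis
      proof (cases k)
        case 0
        then have "a" using False e gF by (cases a) auto
        then have "v = V2" using lw e gF 0 by simp
        then show ?thesis using p e gF 0 \<open>a\<close> by (auto intro: exI[of _ 0])
      next
        case (Suc k')
        then have "last w = Be" using e gF by simp
        then have "v = V2" using lw by simp
        then show ?thesis using p e gF by (cases a) auto
      qed
    qed
  qed
qed

section \<open>Components\<close>

definition mk :: "'a::field \<Rightarrow> 'a \<Rightarrow> 'a poly \<Rightarrow> 'a poly \<Rightarrow> 'a poly \<Rightarrow> 'a poly \<Rightarrow> 'a kqel" where
"mk a1 a3 R M P N = (\<lambda>(v,w).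
  if w = [] then (case v of V1 \<Rightarrow> a1 | V2 \<Rightarrow> coeff R 0 | V3 \<Rightarrow> a3)
  else if v = V2 \<and> w = replicate (length w) Be then coeff R (length w)
  else if v = V2 \<and> w = Al # replicate (length w - 1) Be then coeff M (length w - 1)
  else if v = V3 \<and> w = replicate (length w - 1) Be @ [Ga] then coeff P (length w - 1)
  else if v = V3 \<and> w = Al # replicate (length w - 2) Be @ [Ga] then coeff N (length w - 2)
  else 0)"

lemma mk_e1[simp]: "mk a1 a3 R M P N (V1,[]) = a1" by (simp add: mk_def)
lemma mk_e3[simp]: "mk a1 a3 R M P N (V3,[]) = a3" by (simp add: mk_def)
lemma mk_R[simp]: "mk a1 a3 R M P N (V2, replicate k Be) = coeff R k" by (cases k) (simp_all add: mk_def)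
lemma mk_M[simp]: "mk a1 a3 R M P N (V2, Al # replicate k Be) = coeff M k" by (simp add: mk_def)
lemma mk_P[simp]: "mk a1 a3 R M P N (V3, replicate k Be @ [Ga]) = coeff P k" by (simp add: mk_def)
lemma mk_N[simp]: "mk a1 a3 R M P N (V3, Al # replicate k Be @ [Ga]) = coeff N k"
  by (cases k) (simp_all add: mk_def)

lemma mk_M0[simp]: "mk a1 a3 R M P N (V2, [Al]) = coeff M 0" using mk_M[of a1 a3 R M P N 0] by simp
lemma mk_P0[simp]: "mk a1 a3 R M P N (V3, [Ga]) = coeff P 0" using mk_P[of a1 a3 R M P N 0] by simp
lemma mk_N0[simp]: "mk a1 a3 R M P N (V3, [Al, Ga]) = coeff N 0" using mk_N[of a1 a3 R M P N 0] by simp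

lemma valid_simps[simp]:
  "valid_path (v, [])"
  "valid_path (V2, replicate k Be)"
  "valid_path (V2, Al # replicate k Be)"
  "valid_path (V3, replicate k Be @ [Ga])"
  "valid_path (V3, Al # replicate k Be @ [Ga])"
  by (auto simp: valid_path_def chain_rep chain_Al_rep chain_rep_Ga chain_Al_rep_Ga last_replicate)

lemma mk_valid: "mk a1 a3 R M P N p \<noteq> 0 \<Longrightarrow> valid_path p"
proof -
  assume nz: "mk a1 a3 R M P N p \<noteq> 0"
  obtain v w where p: "p = (v,w)" by force
  show ?thesis using nz unfolding p mk_def
    apply (simp split: if_split_asm)
    apply (metis valid_simps(2))
    apply (metis valid_simps(3))
    apply (metis valid_simps(4))
    apply (metis valid_simps(5))
    done
qed


(* ===== part P2 ===== *)


lemma mk_support: "{p. mk a1 a3 R M P N p \<noteq> 0} \<subseteq> {(V1,[]),(V3,[])}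
   \<union> (\<lambda>k. (V2, replicate k Be)) ` {..degree R} \<union> (\<lambda>k. (V2, Al # replicate k Be)) ` {..degree M}
   \<union> (\<lambda>k. (V3, replicate k Be @ [Ga])) ` {..degree P} \<union> (\<lambda>k. (V3, Al # replicate k Be @ [Ga])) ` {..degree N}"
proof
  fix p assume "p \<in> {p. mk a1 a3 R M P N p \<noteq> 0}"
  then have nz: "mk a1 a3 R M P N p \<noteq> 0" by simp
  then have "valid_path p" by (rule mk_valid)
  from valid_cases[OF this] nz show "p \<in> {(V1,[]),(V3,[])}
   \<union> (\<lambda>k. (V2, replicate k Be)) ` {..degree R} \<union> (\<lambda>k. (V2, Al # replicate k Be)) ` {..degree M}
   \<union> (\<lambda>k. (V3, replicate k Be @ [Ga])) ` {..degree P} \<union> (\<lambda>k. (V3, Al # replicate k Be @ [Ga])) ` {..degree N}"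
    apply (elim disjE exE)
    apply simp_all
    apply (rule disjI1, rule image_eqI[OF refl], simp add: le_degree)
    apply (rule disjI2, rule disjI1, rule image_eqI[OF refl], simp add: le_degree)
    apply (rule disjI2, rule disjI2, rule disjI1, rule image_eqI[OF refl], simp add: le_degree)
    apply (rule disjI2, rule disjI2, rule disjI2, rule image_eqI[OF refl], simp add: le_degree)
    done
qed

lemma mk_kQ[simp]: "mk a1 a3 R M P N \<in> kQ"
  unfolding kQ_def using mk_support[of a1 a3 R M P N] mk_valid[of a1 a3 R M P N]
  by (auto intro: finite_subset)

definition c1 :: "'a::field kqel \<Rightarrow> 'a" where "c1 f = f (V1,[])"
definition c3 :: "'a::field kqel \<Rightarrow> 'a" where "c3 f = f (V3,[])"
definition cR :: "'a::field kqel \<Rightarrow> 'a poly" where "cR f = Abs_poly (\<lambda>k. f (V2, replicate k Be))"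
definition cM :: "'a::field kqel \<Rightarrow> 'a poly" where "cM f = Abs_poly (\<lambda>k. f (V2, Al # replicate k Be))"
definition cP :: "'a::field kqel \<Rightarrow> 'a poly" where "cP f = Abs_poly (\<lambda>k. f (V3, replicate k Be @ [Ga]))"
definition cN :: "'a::field kqel \<Rightarrow> 'a poly" where "cN f = Abs_poly (\<lambda>k. f (V3, Al # replicate k Be @ [Ga]))"

lemma comps_mk[simp]:
  "c1 (mk a1 a3 R M P N) = a1" "c3 (mk a1 a3 R M P N) = a3"
  "cR (mk a1 a3 R M P N) = R" "cM (mk a1 a3 R M P N) = M"
  "cP (mk a1 a3 R M P N) = P" "cN (mk a1 a3 R M P N) = N"
  by (simp_all add: c1_def c3_def cR_def cM_def cP_def cN_def coeff_inverse)

lemma coeff_Abs_poly_fin: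
  assumes "finite {p. f p \<noteq> 0}" "inj h"
  shows "coeff (Abs_poly (\<lambda>k. f (h k))) = (\<lambda>k. f (h k))"
proof -
  have "finite (h -` {p. f p \<noteq> 0})" using assms by (intro finite_vimageI) auto
  then have "\<forall>\<^sub>\<infinity>k. f (h k) = 0" by (simp add: MOST_iff_cofinite vimage_def)
  then show ?thesis by (simp add: Abs_poly_inverse)
qed

lemma inj_shapes:
  "inj (\<lambda>k. (V2, replicate k Be))" "inj (\<lambda>k. (V2, Al # replicate k Be))"
  "inj (\<lambda>k. (V3, replicate k Be @ [Ga]))" "inj (\<lambda>k. (V3, Al # replicate k Be @ [Ga]))"
  by (auto intro!: injI dest: arg_cong[of _ _ length])

lemma kQ_fin: "f \<in> kQ \<Longrightarrow> finite {p. f p \<noteq> 0}" by (simp add: kQ_def)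

lemma coeff_comps:
  assumes "f \<in> kQ"
  shows "coeff (cR f) k = f (V2, replicate k Be)" "coeff (cM f) k = f (V2, Al # replicate k Be)"
    "coeff (cP f) k = f (V3, replicate k Be @ [Ga])" "coeff (cN f) k = f (V3, Al # replicate k Be @ [Ga])"
  using coeff_Abs_poly_fin[OF kQ_fin[OF assms] inj_shapes(1)]
    coeff_Abs_poly_fin[OF kQ_fin[OF assms] inj_shapes(2)]
    coeff_Abs_poly_fin[OF kQ_fin[OF assms] inj_shapes(3)]
    coeff_Abs_poly_fin[OF kQ_fin[OF assms] inj_shapes(4)]
  by (simp_all add: cR_def cM_def cP_def cN_def)

lemma kQ_mk:
  assumes f: "f \<in> kQ"
  shows "mk (c1 f) (c3 f) (cR f) (cM f) (cP f) (cN f) = f"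
proof
  fix p
  show "mk (c1 f) (c3 f) (cR f) (cM f) (cP f) (cN f) p = f p"
  proof (cases "valid_path p")
    case True
    from valid_cases[OF this] show ?thesis
      by (auto simp: coeff_comps[OF f] c1_def c3_def)
  next
    case False
    then have "f p = 0" using f unfolding kQ_def by blast
    moreover have "mk (c1 f) (c3 f) (cR f) (cM f) (cP f) (cN f) p = 0"
      using False mk_valid by blast
    ultimately show ?thesis by simp
  qed
qed

lemma kQ_obtain:
  assumes "f \<in> kQ"
  obtains a1 a3 R M P N where "f = mk a1 a3 R M P N"
  using kQ_mk[OF assms] by metis

lemma mk_eq_iff: "mk a1 a3 R M P N = mk b1 b3 S M2 P2 N2 \<longleftrightarrow>
   a1 = b1 \<and> a3 = b3 \<and> R = S \<and> M = M2 \<and> P = P2 \<and> N = N2"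
  by (metis comps_mk)


(* ===== part P3 ===== *)


lemma kq_mult_split:
  assumes ff: "finite {q. f q \<noteq> 0}" and fg: "finite {r. g r \<noteq> 0}"
  shows "kq_mult f g (v, w) = (\<Sum>i\<le>length w. f (ptgt (v, drop i w), take i w) * g (v, drop i w))"
proof -
  let ?Sf = "{q. f q \<noteq> 0}" and ?Sg = "{r. g r \<noteq> 0}"
  let ?C = "\<lambda>x. psrc (fst x) = ptgt (snd x) \<and> (fst (snd x), snd (fst x) @ snd (snd x)) = (v, w)"
  let ?phi = "\<lambda>i. ((ptgt (v, drop i w), take i w), (v, drop i w))"
  have "kq_mult f g (v, w) = (\<Sum>x\<in>?Sf \<times> ?Sg. if ?C x then f (fst x) * g (snd x) else 0)"
    unfolding kq_mult_def by (simp add: sum.cartesian_product split_beta)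
  also have "\<dots> = (\<Sum>x\<in>{x \<in> ?Sf \<times> ?Sg. ?C x}. f (fst x) * g (snd x))"
    by (rule sum.inter_filter[symmetric]) (use ff fg in auto)
  also have "{x \<in> ?Sf \<times> ?Sg. ?C x} = ?phi ` {i \<in> {..length w}. ?phi i \<in> ?Sf \<times> ?Sg}"
  proof (intro equalityI subsetI)
    fix x :: "path \<times> path" assume x: "x \<in> {x \<in> ?Sf \<times> ?Sg. ?C x}"
    obtain q r where xqr: "x = (q, r)" by (cases x) blast
    obtain qv qw where q: "q = (qv, qw)" by force
    obtain rv rw where r: "r = (rv, rw)" by force
    have c: "qv = ptgt (rv, rw)" "rv = v" "qw @ rw = w" using x xqr q r by (auto simp: psrc_def)
    have "x = ?phi (length qw)" using c xqr q r by auto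
    moreover have "length qw \<le> length w" using c by auto
    ultimately show "x \<in> ?phi ` {i \<in> {..length w}. ?phi i \<in> ?Sf \<times> ?Sg}" using x by auto
  next
    fix x assume "x \<in> ?phi ` {i \<in> {..length w}. ?phi i \<in> ?Sf \<times> ?Sg}"
    then show "x \<in> {x \<in> ?Sf \<times> ?Sg. ?C x}" by (auto simp: psrc_def)
  qed
  also have "(\<Sum>x\<in>?phi ` {i \<in> {..length w}. ?phi i \<in> ?Sf \<times> ?Sg}. f (fst x) * g (snd x))
      = (\<Sum>i\<in>{i \<in> {..length w}. ?phi i \<in> ?Sf \<times> ?Sg}. f (fst (?phi i)) * g (snd (?phi i)))"
  proof (rule sum.reindex[unfolded comp_def])
    show "inj_on ?phi {i \<in> {..length w}. ?phi i \<in> ?Sf \<times> ?Sg}"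
    proof (rule inj_onI)
      fix i j assume i: "i \<in> {i \<in> {..length w}. ?phi i \<in> ?Sf \<times> ?Sg}" and j: "j \<in> {i \<in> {..length w}. ?phi i \<in> ?Sf \<times> ?Sg}"
        and e: "?phi i = ?phi j"
      then have "length (drop i w) = length (drop j w)" by simp
      then show "i = j" using i j by auto
    qed
  qed
  also have "\<dots> = (\<Sum>i\<le>length w. f (ptgt (v, drop i w), take i w) * g (v, drop i w))"
    unfolding fst_conv snd_conv by (rule sum.mono_neutral_left) auto
  finally show ?thesis .
qed

lemma ptgt_simps[simp]:
  "ptgt (v, []) = v"
  "ptgt (V2, replicate k Be) = V2"
  "ptgt (v, Al # w) = V1"
  "ptgt (v, Be # w) = V2"
  "ptgt (v, Ga # w) = V2"
  by (auto simp: ptgt_def)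

lemma ptgt_rep_Ga[simp]: "ptgt (v, replicate k Be @ [Ga]) = V2"
  by (cases k) (auto simp: ptgt_def)

lemma mk_fin: "finite {p. mk a1 a3 R M P N p \<noteq> 0}"
  using mk_kQ kQ_fin by blast

lemma chain_append:
  "chain xs \<Longrightarrow> chain ys \<Longrightarrow> (xs \<noteq> [] \<Longrightarrow> ys \<noteq> [] \<Longrightarrow> asrc (last xs) = atgt (hd ys)) \<Longrightarrow> chain (xs @ ys)"
  by (induction xs rule: chain.induct) (auto, cases ys, auto)

lemma sum_split2: "(\<Sum>i\<le>Suc (Suc k). h i) = h 0 + (\<Sum>i\<le>k. h (Suc i)) + (h (Suc (Suc k)) :: 'b::comm_monoid_add)"
proof -
  have "(\<Sum>i\<le>Suc (Suc k). h i) = h 0 + (\<Sum>i\<le>Suc k. h (Suc i))" by (rule sum.atMost_Suc_shift)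
  also have "(\<Sum>i\<le>Suc k. h (Suc i)) = (\<Sum>i\<le>k. h (Suc i)) + h (Suc (Suc k))" by simp
  finally show ?thesis by (simp add: add.assoc)
qed

lemma mk_mult:
  "kq_mult (mk a1 a3 R M P N) (mk b1 b3 S M2 P2 N2) =
   mk (a1*b1) (a3*b3) (R*S) (smult a1 M2 + M*S) (R*P2 + smult b3 P) (smult a1 N2 + M*P2 + smult b3 N)"
  (is "kq_mult ?f ?g = ?h")
proof
  fix p :: path
  obtain v w where p: "p = (v, w)" by force
  have split: "kq_mult ?f ?g (v, w) = (\<Sum>i\<le>length w. ?f (ptgt (v, drop i w), take i w) * ?g (v, drop i w))"
    by (rule kq_mult_split[OF mk_fin mk_fin])
  show "kq_mult ?f ?g p = ?h p"
  proof (cases "valid_path p")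
    case False
    have "?h p = 0" using False mk_valid by blast
    moreover have zero: "?f (ptgt (v, drop i w), take i w) * ?g (v, drop i w) = 0" if i: "i \<le> length w" for i
    proof (rule ccontr)
      assume "?f (ptgt (v, drop i w), take i w) * ?g (v, drop i w) \<noteq> 0"
      then have vq: "valid_path (ptgt (v, drop i w), take i w)" and vr: "valid_path (v, drop i w)"
        using mk_valid by (metis mult_zero_left, metis mult_zero_right)
      have "valid_path (v, w)"
      proof (cases "drop i w = []")
        case True
        then have "take i w = w" by simp
        then show ?thesis using vq True by simp
      next
        case False
        have ch: "chain (take i w @ drop i w)"
        proof (rule chain_append)
          show "chain (take i w)" using vq by (simp add: valid_path_def)
          show "chain (drop i w)" using vr by (simp add: valid_path_def)
          assume "take i w \<noteq> []"
          then have "asrc (last (take i w)) = ptgt (v, drop i w)" using vq by (simp add: valid_path_def)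
          then show "asrc (last (take i w)) = atgt (hd (drop i w))" using False by (simp add: ptgt_def)
        qed
        then show ?thesis using vr False by (simp add: valid_path_def)
      qed
      then show False using \<open>\<not> valid_path p\<close> p by simp
    qed
    moreover have "(\<Sum>i\<le>length w. ?f (ptgt (v, drop i w), take i w) * ?g (v, drop i w)) = 0"
      by (rule sum.neutral) (use zero in auto)
    ultimately show ?thesis using split p by simp
  next
    case True
    from valid_cases[OF this] show ?thesis
    proof (elim disjE exE)
      assume "p = (V1, [])" then show ?thesis using split p by simp
    next
      assume "p = (V3, [])" then show ?thesis using split p by simp
    next
      fix k assume pk: "p = (V2, replicate k Be)"
      then have vw: "v = V2" "w = replicate k Be" using p by auto
      have "kq_mult ?f ?g p = (\<Sum>i\<le>k. coeff R i * coeff S (k - i))"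
        using split unfolding p vw by (auto intro!: sum.cong simp: min_def)
      then show ?thesis using pk by (simp add: coeff_mult)
    next
      fix k assume pk: "p = (V2, Al # replicate k Be)"
      then have vw: "v = V2" "w = Al # replicate k Be" using p by auto
      have "kq_mult ?f ?g p = a1 * coeff M2 k + (\<Sum>i\<le>k. coeff M i * coeff S (k - i))"
        using split unfolding p vw
        by (simp only: length_Cons sum.atMost_Suc_shift) (auto intro!: sum.cong simp: min_def)
      then show ?thesis using pk by (simp add: coeff_mult)
    next
      fix k assume pk: "p = (V3, replicate k Be @ [Ga])"
      then have vw: "v = V3" "w = replicate k Be @ [Ga]" using p by auto
      have "kq_mult ?f ?g p = (\<Sum>i\<le>k. coeff R i * coeff P2 (k - i)) + coeff P k * b3"
        using split unfolding p vw
        by (simp only: length_append length_replicate list.size add_0 add_Suc_right sum.atMost_Suc)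
           (auto intro!: sum.cong simp: min_def)
      then show ?thesis using pk by (simp add: coeff_mult mult.commute[of "coeff P k" b3])
    next
      fix k assume pk: "p = (V3, Al # replicate k Be @ [Ga])"
      then have vw: "v = V3" "w = Al # replicate k Be @ [Ga]" using p by auto
      have "kq_mult ?f ?g p = a1 * coeff N2 k + (\<Sum>i\<le>k. coeff M i * coeff P2 (k - i)) + coeff N k * b3"
        using split unfolding p vw
        by (simp only: length_Cons length_append length_replicate list.size add_0 add_Suc_right sum_split2)
           (auto intro!: sum.cong simp: min_def)
      then show ?thesis using pk by (simp add: coeff_mult mult.commute[of "coeff N k" b3])
    qed
  qed
qed


(* ===== part P4 ===== *)


lemma mk_add: "kq_add (mk a1 a3 R M P N) (mk b1 b3 S M2 P2 N2) = mk (a1+b1) (a3+b3) (R+S) (M+M2) (P+P2) (N+N2)"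
  by (rule ext) (auto simp: kq_add_def mk_def split: vert.split)

lemma mk_diff: "kq_diff (mk a1 a3 R M P N) (mk b1 b3 S M2 P2 N2) = mk (a1-b1) (a3-b3) (R-S) (M-M2) (P-P2) (N-N2)"
  by (rule ext) (auto simp: kq_diff_def mk_def split: vert.split)

lemma mk_smult: "kq_smult c (mk a1 a3 R M P N) = mk (c*a1) (c*a3) (smult c R) (smult c M) (smult c P) (smult c N)"
  by (rule ext) (auto simp: kq_smult_def mk_def split: vert.split)

lemma mk_zero: "(\<lambda>p. 0) = mk 0 0 0 0 0 0"
  by (rule ext) (auto simp: mk_def split: vert.split)

lemma mk_sum:
  assumes "finite S"
  shows "(\<lambda>p. \<Sum>i\<in>S. cs i * mk (a1 i) (a3 i) (R i) (M i) (P i) (N i) p) =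
     mk (\<Sum>i\<in>S. cs i * a1 i) (\<Sum>i\<in>S. cs i * a3 i) (\<Sum>i\<in>S. smult (cs i) (R i)) (\<Sum>i\<in>S. smult (cs i) (M i))
        (\<Sum>i\<in>S. smult (cs i) (P i)) (\<Sum>i\<in>S. smult (cs i) (N i))"
  using assms
proof (induction S rule: finite_induct)
  case empty
  then show ?case by (simp add: mk_zero)
next
  case (insert x F)
  have "(\<lambda>p. \<Sum>i\<in>insert x F. cs i * mk (a1 i) (a3 i) (R i) (M i) (P i) (N i) p) =
     kq_add (kq_smult (cs x) (mk (a1 x) (a3 x) (R x) (M x) (P x) (N x)))
       (\<lambda>p. \<Sum>i\<in>F. cs i * mk (a1 i) (a3 i) (R i) (M i) (P i) (N i) p)"
    using insert(1,2) by (simp add: kq_add_def kq_smult_def)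
  also have "\<dots> = kq_add (kq_smult (cs x) (mk (a1 x) (a3 x) (R x) (M x) (P x) (N x)))
     (mk (\<Sum>i\<in>F. cs i * a1 i) (\<Sum>i\<in>F. cs i * a3 i) (\<Sum>i\<in>F. smult (cs i) (R i)) (\<Sum>i\<in>F. smult (cs i) (M i))
        (\<Sum>i\<in>F. smult (cs i) (P i)) (\<Sum>i\<in>F. smult (cs i) (N i)))"
    by (simp only: insert.IH)
  also have "\<dots> = mk (\<Sum>i\<in>insert x F. cs i * a1 i) (\<Sum>i\<in>insert x F. cs i * a3 i) (\<Sum>i\<in>insert x F. smult (cs i) (R i)) (\<Sum>i\<in>insert x F. smult (cs i) (M i))
        (\<Sum>i\<in>insert x F. smult (cs i) (P i)) (\<Sum>i\<in>insert x F. smult (cs i) (N i))"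
    using insert by (simp add: mk_smult mk_add)
  finally show ?case .
qed

lemma alpha_mk: "alpha = mk 0 0 0 1 0 0"
proof (rule ext)
  fix p :: path
  show "alpha p = mk 0 0 0 1 0 0 p"
  proof (cases "valid_path p")
    case True
    from valid_cases[OF this] show ?thesis
      by (auto simp: alpha_def kq_path_def coeff_1)
  next
    case False
    then have "p \<noteq> (V2, [Al])" using valid_simps(3)[of 0] by auto
    moreover have "mk 0 0 0 1 0 0 p = 0" using False mk_valid by blast
    ultimately show ?thesis by (simp add: alpha_def kq_path_def)
  qed
qed

lemma gamma_mk: "gamma = mk 0 0 0 0 1 0"
proof (rule ext)
  fix p :: path
  show "gamma p = mk 0 0 0 0 1 0 p"
  proof (cases "valid_path p")
    case True
    from valid_cases[OF this] show ?thesis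
      by (auto simp: gamma_def kq_path_def coeff_1)
  next
    case False
    then have "p \<noteq> (V3, [Ga])" using valid_simps(4)[of 0] by auto
    moreover have "mk 0 0 0 0 1 0 p = 0" using False mk_valid by blast
    ultimately show ?thesis by (simp add: gamma_def kq_path_def)
  qed
qed

lemma bpow_mk: "bpow i = mk 0 0 (monom 1 i) 0 0 0"
proof (rule ext)
  fix p :: path
  show "bpow i p = mk 0 0 (monom 1 i) 0 0 0 p"
  proof (cases "valid_path p")
    case True
    from valid_cases[OF this] show ?thesis
      by (auto simp: bpow_def kq_path_def coeff_monom split: if_splits)
  next
    case False
    then have "p \<noteq> (V2, replicate i Be)" using valid_simps(2)[of i] by auto
    moreover have "mk 0 0 (monom 1 i) 0 0 0 p = 0" using False mk_valid by blast
    ultimately show ?thesis by (simp add: bpow_def kq_path_def)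
  qed
qed

lemma embed_mk: "embed v = mk 0 0 v 0 0 0"
proof (rule ext)
  fix p :: path
  obtain x w where p: "p = (x, w)" by force
  show "embed v p = mk 0 0 v 0 0 0 p"
  proof (cases "x = V2 \<and> (\<forall>a\<in>set w. a = Be)")
    case True
    then have "w = replicate (length w) Be" by (simp add: replicate_length_same)
    then have "p = (V2, replicate (length w) Be)" using p True by simp
    then show ?thesis by (simp add: embed_def)
  next
    case False
    have "mk 0 0 v 0 0 0 p = 0"
    proof (rule ccontr)
      assume "mk 0 0 v 0 0 0 p \<noteq> 0"
      moreover from this have "valid_path p" by (rule mk_valid)
      ultimately show False using valid_cases[of p] False p by auto
    qed
    moreover have "embed v p = 0" using False p unfolding embed_def by auto
    ultimately show ?thesis by simp
  qed
qed

section \<open>Description of the ideal\<close>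

definition Jset :: "nat \<Rightarrow> nat \<Rightarrow> nat \<Rightarrow> ('a::field) poly set \<Rightarrow> 'a kqel set" where
  "Jset n n' n'' V = {mk 0 0 R M P N | R M P N. monom 1 n dvd R \<and> monom 1 n' dvd M \<and> monom 1 n'' dvd P \<and> N \<in> V}"

lemma subspace_add: "poly_subspace V \<Longrightarrow> x \<in> V \<Longrightarrow> y \<in> V \<Longrightarrow> x + y \<in> V"
  by (simp add: poly_subspace_def)
lemma subspace_smult: "poly_subspace V \<Longrightarrow> x \<in> V \<Longrightarrow> smult c x \<in> V"
  by (simp add: poly_subspace_def)
lemma subspace_zero: "poly_subspace V \<Longrightarrow> 0 \<in> V"
  by (simp add: poly_subspace_def)
lemma subspace_diff: "poly_subspace V \<Longrightarrow> x \<in> V \<Longrightarrow> y \<in> V \<Longrightarrow> x - y \<in> V"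
  using subspace_add[of V x "smult (-1) y"] subspace_smult[of V y "-1"] by simp
lemma subspace_sum:
  assumes "poly_subspace V" "finite S" "\<And>i. i \<in> S \<Longrightarrow> f i \<in> V"
  shows "sum f S \<in> V"
  using assms(2,3) by (induction S rule: finite_induct) (auto intro: subspace_add[OF assms(1)] subspace_zero[OF assms(1)])

lemma monom_dvd_mono: "monom 1 a dvd p \<Longrightarrow> b \<le> a \<Longrightarrow> monom 1 b dvd (p :: 'a::field poly)"
  by (simp add: monom_1_dvd_iff')

locale qsetup =
  fixes n n' n'' :: nat and V :: "('a::field) poly set"
  assumes n'n: "n' \<le> n" and n''n: "n'' \<le> n"
    and sub: "poly_subspace V" and big: "\<forall>p. monom 1 (min n' n'') dvd p \<longrightarrow> p \<in> V"
begin

abbreviation "m \<equiv> min n' n''"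
abbreviation "I \<equiv> I_ideal n n' n'' V"
abbreviation "J \<equiv> Jset n n' n'' V"

lemma bigV: "monom 1 k dvd p \<Longrightarrow> m \<le> k \<Longrightarrow> p \<in> V"
  using big monom_dvd_mono by blast

lemma J_mem: "monom 1 n dvd R \<Longrightarrow> monom 1 n' dvd M \<Longrightarrow> monom 1 n'' dvd P \<Longrightarrow> N \<in> V \<Longrightarrow> mk 0 0 R M P N \<in> J"
  unfolding Jset_def by blast

lemma I_sub_J: "x \<in> I \<Longrightarrow> x \<in> J"
  unfolding I_ideal_def
proof (induction x rule: kq_ideal.induct)
  case (gen s)
  then show ?case
  proof (elim UnE insertE CollectE exE conjE)
    assume "s = kq_mult alpha (bpow n')"
    then show ?thesis by (simp add: alpha_mk bpow_mk mk_mult J_mem subspace_zero[OF sub])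
  next
    assume "s = bpow n"
    then show ?thesis by (simp add: bpow_mk J_mem subspace_zero[OF sub])
  next
    assume "s = kq_mult (bpow n'') gamma"
    then show ?thesis by (simp add: gamma_mk bpow_mk mk_mult J_mem subspace_zero[OF sub])
  next
    assume "s \<in> {}" then show ?thesis by simp
  next
    fix v assume "s = kq_mult alpha (kq_mult (embed v) gamma)" "v \<in> V"
    then show ?thesis by (simp add: alpha_mk gamma_mk embed_mk mk_mult J_mem)
  qed
next
  case zero
  then show ?case by (simp add: mk_zero J_mem subspace_zero[OF sub])
next
  case (add x y)
  then obtain R M P N R2 M2 P2 N2 where x: "x = mk 0 0 R M P N" "monom 1 n dvd R" "monom 1 n' dvd M" "monom 1 n'' dvd P" "N \<in> V"
    and y: "y = mk 0 0 R2 M2 P2 N2" "monom 1 n dvd R2" "monom 1 n' dvd M2" "monom 1 n'' dvd P2" "N2 \<in> V"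
    unfolding Jset_def by blast
  show ?case using x y by (simp add: mk_add J_mem subspace_add[OF sub])
next
  case (lmult a x)
  then obtain R M P N where x: "x = mk 0 0 R M P N" "monom 1 n dvd R" "monom 1 n' dvd M" "monom 1 n'' dvd P" "N \<in> V"
    unfolding Jset_def by blast
  obtain a1 a3 Ra Ma Pa Na where a: "a = mk a1 a3 Ra Ma Pa Na" using kQ_obtain[OF lmult(1)] by metis
  have "monom 1 n' dvd M * Ra" using x by (simp add: dvd_mult2)
  moreover have "monom 1 n' dvd R" using x(2) monom_dvd_mono n'n by blast
  then have "monom 1 n' dvd Ma * R" by (rule dvd_mult)
  moreover have "Ma * P \<in> V" using x bigV[of n'' "Ma * P"] by (simp add: dvd_mult)
  ultimately show ?case using x a
    by (auto simp: mk_mult intro!: J_mem dvd_add dvd_smult dvd_mult subspace_add[OF sub] subspace_smult[OF sub])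
next
  case (rmult a x)
  then obtain R M P N where x: "x = mk 0 0 R M P N" "monom 1 n dvd R" "monom 1 n' dvd M" "monom 1 n'' dvd P" "N \<in> V"
    unfolding Jset_def by blast
  obtain a1 a3 Ra Ma Pa Na where a: "a = mk a1 a3 Ra Ma Pa Na" using kQ_obtain[OF rmult(1)] by metis
  have "monom 1 n'' dvd R" using x(2) monom_dvd_mono n''n by blast
  then have "monom 1 n'' dvd R * Pa" by (rule dvd_mult2)
  moreover have "M * Pa \<in> V" using x bigV[of n' "M * Pa"] by (simp add: dvd_mult2)
  ultimately show ?case using x a
    by (auto simp: mk_mult intro!: J_mem dvd_add dvd_smult dvd_mult2 subspace_add[OF sub] subspace_smult[OF sub])
qed

lemma J_sub_I: "x \<in> J \<Longrightarrow> x \<in> I"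
proof -
  assume "x \<in> J"
  then obtain R M P N where x: "x = mk 0 0 R M P N" "monom 1 n dvd R" "monom 1 n' dvd M" "monom 1 n'' dvd P" "N \<in> V"
    unfolding Jset_def by blast
  obtain R1 where R1: "R = monom 1 n * R1" using x by (auto elim: dvdE)
  obtain M1 where M1: "M = monom 1 n' * M1" using x by (auto elim: dvdE)
  obtain P1 where P1: "P = monom 1 n'' * P1" using x by (auto elim: dvdE)
  let ?G = "{kq_mult alpha (bpow n'), bpow n, kq_mult (bpow n'') gamma} \<union> {kq_mult alpha (kq_mult (embed v) gamma) | v. v \<in> V}"
  have g1: "kq_mult (bpow n) (mk 0 0 R1 0 0 0) \<in> kq_ideal ?G"
    by (rule kq_ideal.rmult) (auto intro: kq_ideal.gen)
  have g2: "kq_mult (kq_mult alpha (bpow n')) (mk 0 0 M1 0 0 0) \<in> kq_ideal ?G"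
    by (rule kq_ideal.rmult) (auto intro: kq_ideal.gen)
  have g3: "kq_mult (mk 0 0 P1 0 0 0) (kq_mult (bpow n'') gamma) \<in> kq_ideal ?G"
    by (rule kq_ideal.lmult) (auto intro: kq_ideal.gen)
  have g4: "kq_mult alpha (kq_mult (embed N) gamma) \<in> kq_ideal ?G"
    using x by (auto intro: kq_ideal.gen)
  have "kq_add (kq_add (kq_add (kq_mult (bpow n) (mk 0 0 R1 0 0 0)) (kq_mult (kq_mult alpha (bpow n')) (mk 0 0 M1 0 0 0)))
     (kq_mult (mk 0 0 P1 0 0 0) (kq_mult (bpow n'') gamma))) (kq_mult alpha (kq_mult (embed N) gamma)) = x"
    using x R1 M1 P1 by (simp add: alpha_mk gamma_mk bpow_mk embed_mk mk_mult mk_add mult.commute)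
  moreover have "kq_add (kq_add (kq_add (kq_mult (bpow n) (mk 0 0 R1 0 0 0)) (kq_mult (kq_mult alpha (bpow n')) (mk 0 0 M1 0 0 0)))
     (kq_mult (mk 0 0 P1 0 0 0) (kq_mult (bpow n'') gamma))) (kq_mult alpha (kq_mult (embed N) gamma)) \<in> kq_ideal ?G"
    using g1 g2 g3 g4 by (intro kq_ideal.add)
  ultimately show "x \<in> I" unfolding I_ideal_def by simp
qed

lemma I_eq_J: "x \<in> I \<longleftrightarrow> x \<in> J"
  using I_sub_J J_sub_I by blast

end


(* ===== part P5 ===== *)


definition Dd :: "('a::field) poly \<Rightarrow> 'a poly \<Rightarrow> 'a kqel \<Rightarrow> 'a kqel" where
  "Dd A F f = mk 0 0 (F * pderiv (cR f)) (A * cM f + F * pderiv (cM f)) (F * pderiv (cP f)) (A * cN f + F * pderiv (cN f))"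

lemma Dd_mk: "Dd A F (mk a1 a3 R M P N) = mk 0 0 (F * pderiv R) (A*M + F*pderiv M) (F*pderiv P) (A*N + F*pderiv N)"
  by (simp add: Dd_def)

lemma dvd_deriv:
  fixes F G :: "'a::field poly"
  assumes h: "of_nat k * coeff F 0 = 0" and g: "monom 1 k dvd G"
  shows "monom 1 k dvd F * pderiv G"
proof (cases k)
  case 0
  then show ?thesis by simp
next
  case (Suc k')
  obtain G1 where G1: "G = monom 1 k * G1" using g by (auto elim: dvdE)
  have "monom 1 1 dvd F - [:coeff F 0:]" by (simp add: monom_1_dvd_iff')
  then obtain Q where Q: "F - [:coeff F 0:] = monom 1 1 * Q" by (auto elim: dvdE)
  then have F: "F = [:coeff F 0:] + monom 1 1 * Q" by (simp add: algebra_simps)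
  have pd: "pderiv G = monom 1 k * pderiv G1 + G1 * monom (of_nat k) k'"
    using Suc by (simp add: G1 pderiv_mult pderiv_monom)
  define a where "a = coeff F 0"
  have F': "F = [:a:] + monom 1 1 * Q" using F a_def by simp
  have ha: "of_nat k * a = 0" using h a_def by simp
  have "F * pderiv G = ([:a:] + monom 1 1 * Q) * (monom 1 k * pderiv G1 + G1 * monom (of_nat k) k')"
    using F' pd by simp
  also have "\<dots> = monom 1 k * (F * pderiv G1) + G1 * ([:a:] * monom (of_nat k) k') + Q * G1 * (monom 1 1 * monom (of_nat k) k')"
    using F' by (simp add: algebra_simps)
  also have "[:a:] * monom (of_nat k) k' = 0"
    using ha by (simp add: monom_0 mult_monom[symmetric, of _ 0] mult.commute)
  also have "monom 1 1 * monom (of_nat k) k' = monom 1 k * [:of_nat k:]"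
    using Suc by (simp add: mult_monom monom_0[symmetric])
  finally have "F * pderiv G = monom 1 k * (F * pderiv G1 + Q * G1 * [:of_nat k:])"
    by (simp add: algebra_simps)
  then show ?thesis by simp
qed

lemma kq_diff_self: "kq_diff z z = (\<lambda>p. 0)" by (simp add: kq_diff_def)

context qsetup
begin

lemma zero_I: "(\<lambda>p. 0) \<in> I" unfolding I_ideal_def by (rule kq_ideal.zero)

lemma Dd_add: "Dd A F (kq_add (mk a1 a3 R M P N) (mk b1 b3 S M2 P2 N2)) = kq_add (Dd A F (mk a1 a3 R M P N)) (Dd A F (mk b1 b3 S M2 P2 N2))"
  by (simp add: mk_add Dd_mk pderiv_add algebra_simps)

lemma Dd_smult: "Dd A F (kq_smult c (mk a1 a3 R M P N)) = kq_smult c (Dd A F (mk a1 a3 R M P N))"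
  by (simp add: mk_smult Dd_mk pderiv_smult smult_add_right algebra_simps)

lemma Dd_mult: "Dd A F (kq_mult (mk a1 a3 R M P N) (mk b1 b3 S M2 P2 N2)) =
   kq_add (kq_mult (Dd A F (mk a1 a3 R M P N)) (mk b1 b3 S M2 P2 N2)) (kq_mult (mk a1 a3 R M P N) (Dd A F (mk b1 b3 S M2 P2 N2)))"
  by (simp add: mk_mult mk_add Dd_mk pderiv_add pderiv_smult pderiv_mult mk_eq_iff smult_add_right algebra_simps)

lemma Dd_der:
  assumes theta: "\<forall>v\<in>V. A*v + F*pderiv v \<in> V"
    and hn: "of_nat n * coeff F 0 = 0" and hn': "of_nat n' * coeff F 0 = 0" and hn'': "of_nat n'' * coeff F 0 = 0"
  shows "is_lam_der I (Dd A F)"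
  unfolding is_lam_der_def
proof (intro conjI ballI allI impI)
  fix x :: "'a kqel" assume "x \<in> kQ" then show "Dd A F x \<in> kQ" by (simp add: Dd_def)
next
  fix x y :: "'a kqel" assume x: "x \<in> kQ" and y: "y \<in> kQ" and d: "kq_diff x y \<in> I"
  obtain a1 a3 R M P N where xe: "x = mk a1 a3 R M P N" using kQ_obtain[OF x] by metis
  obtain b1 b3 S M2 P2 N2 where ye: "y = mk b1 b3 S M2 P2 N2" using kQ_obtain[OF y] by metis
  from d have "kq_diff x y \<in> J" by (simp add: I_eq_J)
  then obtain R' M' P' N' where e: "kq_diff x y = mk 0 0 R' M' P' N'" and
     dv: "monom 1 n dvd R'" "monom 1 n' dvd M'" "monom 1 n'' dvd P'" "N' \<in> V"
    unfolding Jset_def by blast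
  from e have c: "R - S = R'" "M - M2 = M'" "P - P2 = P'" "N - N2 = N'"
    unfolding xe ye mk_diff mk_eq_iff by auto
  have "kq_diff (Dd A F x) (Dd A F y) = mk 0 0 (F * pderiv R') (A * M' + F * pderiv M') (F * pderiv P') (A * N' + F * pderiv N')"
    unfolding xe ye Dd_mk mk_diff c[symmetric] by (simp add: pderiv_diff algebra_simps)
  also have "\<dots> \<in> J"
    using dv theta by (intro J_mem dvd_add dvd_mult dvd_deriv hn hn' hn'') auto
  finally show "kq_diff (Dd A F x) (Dd A F y) \<in> I" by (simp add: I_eq_J)
next
  fix x y :: "'a kqel" assume x: "x \<in> kQ" and y: "y \<in> kQ"
  obtain a1 a3 R M P N where xe: "x = mk a1 a3 R M P N" using kQ_obtain[OF x] by metis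
  obtain b1 b3 S M2 P2 N2 where ye: "y = mk b1 b3 S M2 P2 N2" using kQ_obtain[OF y] by metis
  show "kq_diff (Dd A F (kq_add x y)) (kq_add (Dd A F x) (Dd A F y)) \<in> I"
    unfolding xe ye Dd_add kq_diff_self by (rule zero_I)
  show "kq_diff (Dd A F (kq_mult x y)) (kq_add (kq_mult (Dd A F x) y) (kq_mult x (Dd A F y))) \<in> I"
    unfolding xe ye Dd_mult kq_diff_self by (rule zero_I)
next
  fix c and x :: "'a kqel" assume x: "x \<in> kQ"
  obtain a1 a3 R M P N where xe: "x = mk a1 a3 R M P N" using kQ_obtain[OF x] by metis
  show "kq_diff (Dd A F (kq_smult c x)) (kq_smult c (Dd A F x)) \<in> I"
    unfolding xe Dd_smult kq_diff_self by (rule zero_I)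
qed

end


(* ===== part P6 ===== *)


lemma Dd_sum:
  fixes A F :: "nat \<Rightarrow> ('a::field) poly" and cs :: "nat \<Rightarrow> 'a"
  assumes "finite S"
  shows "(\<lambda>x p. \<Sum>i\<in>S. cs i * Dd (A i) (F i) x p) = Dd (\<Sum>i\<in>S. smult (cs i) (A i)) (\<Sum>i\<in>S. smult (cs i) (F i))"
proof (rule ext)
  fix x :: "'a kqel"
  have "(\<lambda>p. \<Sum>i\<in>S. cs i * Dd (A i) (F i) x p) =
    (\<lambda>p. \<Sum>i\<in>S. cs i * mk ((\<lambda>i. 0) i) ((\<lambda>i. 0) i) ((\<lambda>i. F i * pderiv (cR x)) i)
        ((\<lambda>i. A i * cM x + F i * pderiv (cM x)) i) ((\<lambda>i. F i * pderiv (cP x)) i) ((\<lambda>i. A i * cN x + F i * pderiv (cN x)) i) p)"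
    by (simp add: Dd_def)
  also have "\<dots> = mk 0 0 (\<Sum>i\<in>S. smult (cs i) (F i * pderiv (cR x))) (\<Sum>i\<in>S. smult (cs i) (A i * cM x + F i * pderiv (cM x)))
      (\<Sum>i\<in>S. smult (cs i) (F i * pderiv (cP x))) (\<Sum>i\<in>S. smult (cs i) (A i * cN x + F i * pderiv (cN x)))"
    by (subst mk_sum[OF assms]) simp
  also have "\<dots> = Dd (\<Sum>i\<in>S. smult (cs i) (A i)) (\<Sum>i\<in>S. smult (cs i) (F i)) x"
    by (simp add: Dd_def sum_distrib_right smult_add_right sum.distrib)
  finally show "(\<lambda>p. \<Sum>i\<in>S. cs i * Dd (A i) (F i) x p) = Dd (\<Sum>i\<in>S. smult (cs i) (A i)) (\<Sum>i\<in>S. smult (cs i) (F i)) x" .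
qed

context qsetup
begin

lemma J_comps:
  assumes "mk a1 a3 R M P N \<in> J"
  shows "monom 1 n dvd R" "monom 1 n' dvd M" "monom 1 n'' dvd P" "N \<in> V"
  using assms unfolding Jset_def by (auto simp: mk_eq_iff)

lemma inner_zero:
  assumes A0: "coeff A 0 = 0" and Am: "\<forall>j\<ge>m. coeff A j = 0" and Fn: "\<forall>j\<ge>n. coeff F j = 0"
    and inn: "is_lam_inner I (Dd A F)"
  shows "A = 0 \<and> F = 0"
proof -
  from inn obtain a where a: "a \<in> kQ" and h: "\<And>x. x \<in> kQ \<Longrightarrow> kq_diff (Dd A F x) (kq_diff (kq_mult a x) (kq_mult x a)) \<in> I"
    unfolding is_lam_inner_def by blast
  obtain a1 a3 Ra Ma Pa Na where ae: "a = mk a1 a3 Ra Ma Pa Na" using kQ_obtain[OF a] by metis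
  have "kq_diff (Dd A F (bpow 1)) (kq_diff (kq_mult a (bpow 1)) (kq_mult (bpow 1) a)) \<in> J"
    using h[of "bpow 1"] by (simp add: bpow_mk I_eq_J)
  then have "monom 1 n dvd F"
    unfolding ae bpow_mk Dd_mk mk_mult mk_diff by (auto dest: J_comps simp: pderiv_monom)
  then have "coeff F j = 0" for j using Fn by (cases "j < n") (auto simp: monom_1_dvd_iff')
  then have F0: "F = 0" by (intro poly_eqI) simp
  have "kq_diff (Dd A F alpha) (kq_diff (kq_mult a alpha) (kq_mult alpha a)) \<in> J"
    using h[of alpha] by (simp add: alpha_mk I_eq_J)
  then have d1: "monom 1 n' dvd A - ([:a1:] - Ra)"
    unfolding ae alpha_mk Dd_mk mk_mult mk_diff using F0 by (auto dest: J_comps)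
  have "kq_diff (Dd A F gamma) (kq_diff (kq_mult a gamma) (kq_mult gamma a)) \<in> J"
    using h[of gamma] by (simp add: gamma_mk I_eq_J)
  then have d2: "monom 1 n'' dvd - (Ra - [:a3:])"
    unfolding ae gamma_mk Dd_mk mk_mult mk_diff using F0 by (auto dest: J_comps)
  have "coeff A j = 0" for j
  proof (cases "j = 0 \<or> j \<ge> m")
    case True then show ?thesis using A0 Am by auto
  next
    case False
    then have j: "j < n'" "j < n''" "j \<noteq> 0" by auto
    have "coeff (A - ([:a1:] - Ra)) j = 0" using d1 j by (simp add: monom_1_dvd_iff')
    moreover have "coeff (- (Ra - [:a3:])) j = 0" using d2 j by (simp add: monom_1_dvd_iff')
    ultimately show ?thesis using j by (simp add: coeff_pCons split: nat.splits)
  qed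
  then have "A = 0" by (intro poly_eqI) simp
  then show ?thesis using F0 by simp
qed

end


(* ===== part P7 ===== *)


locale vs =
  fixes sc :: "'a::field \<Rightarrow> 'v::ab_group_add \<Rightarrow> 'v"
  assumes sc_add_right: "sc c (x + y) = sc c x + sc c y"
    and sc_add_left: "sc (c + d) x = sc c x + sc d x"
    and sc_assoc: "sc c (sc d x) = sc (c * d) x"
    and sc_one: "sc 1 x = x"
begin

lemma sc_zero_left[simp]: "sc 0 x = 0"
  using sc_add_left[of 0 0 x] by simp

lemma sc_zero_right[simp]: "sc c 0 = 0"
  using sc_add_right[of c 0 0] by simp

lemma sc_sum_right: "sc c (sum f S) = (\<Sum>i\<in>S. sc c (f i))"
  by (induction S rule: infinite_finite_induct) (auto simp: sc_add_right)

lemma sc_sum_left: "sc (sum f S) x = (\<Sum>i\<in>S. sc (f i) x)"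
  by (induction S rule: infinite_finite_induct) (auto simp: sc_add_left)

definition indep :: "('i \<Rightarrow> 'v) \<Rightarrow> 'i set \<Rightarrow> bool" where
  "indep w I \<longleftrightarrow> (\<forall>cs. (\<Sum>i\<in>I. sc (cs i) (w i)) = 0 \<longrightarrow> (\<forall>i\<in>I. cs i = 0))"

definition lin :: "('v \<Rightarrow> 'a) \<Rightarrow> bool" where
  "lin L \<longleftrightarrow> (\<forall>x y. L (x + y) = L x + L y) \<and> (\<forall>c x. L (sc c x) = c * L x)"

definition closed :: "('v \<Rightarrow> bool) \<Rightarrow> bool" where
  "closed P \<longleftrightarrow> (\<forall>x y. P x \<longrightarrow> P y \<longrightarrow> P (x + y)) \<and> (\<forall>c x. P x \<longrightarrow> P (sc c x))"

lemma LA_step: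
  assumes fin: "finite (I :: 'i set)" and ind: "indep w I" and Pw: "\<forall>i\<in>I. P (w i)" and cl: "closed P" and L: "lin L"
  shows "\<exists>(I' :: 'i set) (w' :: 'i \<Rightarrow> 'v). finite I' \<and> card I \<le> card I' + 1 \<and> indep w' I' \<and> (\<forall>i\<in>I'. P (w' i) \<and> L (w' i) = 0)"
proof (cases "\<forall>i\<in>I. L (w i) = 0")
  case True
  show ?thesis
    apply (rule exI[of _ I], rule exI[of _ w])
    using True fin ind Pw by auto
next
  case False
  then obtain j where j: "j \<in> I" "L (w j) \<noteq> 0" by blast
  define w' where "w' i = w i + sc (- (L (w i) / L (w j))) (w j)" for i
  have P': "P (w' i)" if "i \<in> I" for i
  proof -
    have c1: "\<And>x y. P x \<Longrightarrow> P y \<Longrightarrow> P (x + y)" and c2: "\<And>c x. P x \<Longrightarrow> P (sc c x)"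
      using cl unfolding closed_def by auto
    show ?thesis unfolding w'_def using that j Pw by (intro c1 c2) auto
  qed
  have L': "L (w' i) = 0" for i
  proof -
    have l1: "\<And>x y. L (x + y) = L x + L y" and l2: "\<And>c x. L (sc c x) = c * L x"
      using L unfolding lin_def by auto
    show ?thesis unfolding w'_def l1 l2 using j by simp
  qed
  have ind': "indep w' (I - {j})"
    unfolding indep_def
  proof (intro allI impI)
    fix cs assume z: "(\<Sum>i\<in>I - {j}. sc (cs i) (w' i)) = 0"
    define t where "t = (\<Sum>i\<in>I - {j}. cs i * (- (L (w i) / L (w j))))"
    define cs' where "cs' = cs(j := t)"
    have "(\<Sum>i\<in>I - {j}. sc (cs i) (w' i)) = (\<Sum>i\<in>I - {j}. sc (cs i) (w i)) + sc t (w j)"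
      unfolding w'_def t_def by (simp add: sc_add_right sc_assoc sum.distrib sc_sum_left)
    also have "\<dots> = (\<Sum>i\<in>I. sc (cs' i) (w i))"
      using fin j by (simp add: cs'_def sum.remove[of I j] add.commute)
    finally have z': "(\<Sum>i\<in>I. sc (cs' i) (w i)) = 0" using z by simp
    have h: "\<forall>cs. (\<Sum>i\<in>I. sc (cs i) (w i)) = 0 \<longrightarrow> (\<forall>i\<in>I. cs i = 0)"
      using ind unfolding indep_def .
    have "(\<Sum>i\<in>I. sc (cs' i) (w i)) = 0 \<longrightarrow> (\<forall>i\<in>I. cs' i = 0)" using h by (rule spec)
    then have "\<forall>i\<in>I. cs' i = 0" using z' by (rule mp)
    then show "\<forall>i\<in>I - {j}. cs i = 0" unfolding cs'_def by (metis DiffE fun_upd_other singletonI)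
  qed
  show ?thesis
    apply (rule exI[of _ "I - {j}"], rule exI[of _ w'])
    using fin j P' L' ind' by auto
qed

lemma LA_list:
  assumes fin: "finite (I :: 'i set)" and ind: "indep w I" and Pw: "\<forall>i\<in>I. P (w i)" and cl: "closed P" and L: "\<forall>L\<in>set Ls. lin L"
  shows "\<exists>(I' :: 'i set) (w' :: 'i \<Rightarrow> 'v). finite I' \<and> card I \<le> card I' + length Ls \<and> indep w' I' \<and> (\<forall>i\<in>I'. P (w' i) \<and> (\<forall>L\<in>set Ls. L (w' i) = 0))"
  using L
proof (induction Ls)
  case Nil
  show ?case
    apply (rule exI[of _ I], rule exI[of _ w])
    using fin ind Pw by auto
next
  case (Cons L1 Ls)
  have "\<forall>L\<in>set Ls. lin L" using Cons.prems by simp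
  from Cons.IH[OF this] obtain I1 :: "'i set" and w1 where h: "finite I1" "card I \<le> card I1 + length Ls" "indep w1 I1"
    "\<forall>i\<in>I1. P (w1 i) \<and> (\<forall>L\<in>set Ls. L (w1 i) = 0)" by blast
  let ?P = "\<lambda>x. P x \<and> (\<forall>L\<in>set Ls. L x = 0)"
  have linLs: "\<And>L. L \<in> set Ls \<Longrightarrow> lin L" using Cons.prems by simp
  have c1: "\<And>x y. P x \<Longrightarrow> P y \<Longrightarrow> P (x + y)" and c2: "\<And>c x. P x \<Longrightarrow> P (sc c x)"
    using cl unfolding closed_def by auto
  have cl': "closed ?P" unfolding closed_def
  proof (rule conjI; intro allI impI)
    fix x y assume x: "?P x" and y: "?P y"
    have "L (x + y) = 0" if "L \<in> set Ls" for L
      using linLs[OF that] x y that unfolding lin_def by auto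
    then show "?P (x + y)" using c1 x y by blast
  next
    fix c x assume x: "?P x"
    have "L (sc c x) = 0" if "L \<in> set Ls" for L
      using linLs[OF that] x that unfolding lin_def by auto
    then show "?P (sc c x)" using c2 x by blast
  qed
  have "lin L1" using Cons.prems by simp
  from LA_step[OF h(1) h(3) h(4) cl' this] obtain I' :: "'i set" and w' where
    r: "finite I'" "card I1 \<le> card I' + 1" "indep w' I'" "\<forall>i\<in>I'. ?P (w' i) \<and> L1 (w' i) = 0"
    by blast
  show ?case
    apply (rule exI[of _ I'], rule exI[of _ w'])
    using r h(2) by auto
qed

lemma indep_one:
  assumes "indep w I" "finite I" "i \<in> I" "sc a (w i) = 0"
  shows "a = 0"
proof -
  let ?cs = "\<lambda>k. if k = i then a else 0"
  have "(\<Sum>k\<in>I. sc (?cs k) (w k)) = (\<Sum>k\<in>I. if k = i then sc a (w i) else 0)"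
    by (intro sum.cong) auto
  also have "\<dots> = sc a (w i)" using assms(2,3) by simp
  finally have z: "(\<Sum>k\<in>I. sc (?cs k) (w k)) = 0" using assms(4) by simp
  have h: "\<forall>cs. (\<Sum>i\<in>I. sc (cs i) (w i)) = 0 \<longrightarrow> (\<forall>i\<in>I. cs i = 0)"
    using assms(1) unfolding indep_def .
  have "(\<Sum>k\<in>I. sc (?cs k) (w k)) = 0 \<longrightarrow> (\<forall>k\<in>I. ?cs k = 0)" using h by (rule spec)
  then have "\<forall>k\<in>I. ?cs k = 0" using z by (rule mp)
  then show ?thesis using assms(3) by force
qed

lemma indep_two:
  assumes "indep w I" "finite I" "i \<in> I" "j \<in> I" "i \<noteq> j" "sc a (w i) + sc b (w j) = 0"
  shows "a = 0 \<and> b = 0"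
proof -
  let ?cs = "\<lambda>k. if k = i then a else if k = j then b else 0"
  have "(\<Sum>k\<in>I. sc (?cs k) (w k)) = (\<Sum>k\<in>I. (if k = i then sc a (w i) else 0) + (if k = j then sc b (w j) else 0))"
    using assms(5) by (intro sum.cong) auto
  also have "\<dots> = sc a (w i) + sc b (w j)"
    using assms(2,3,4) by (simp add: sum.distrib)
  finally have z: "(\<Sum>k\<in>I. sc (?cs k) (w k)) = 0" using assms(6) by simp
  have h: "\<forall>cs. (\<Sum>i\<in>I. sc (cs i) (w i)) = 0 \<longrightarrow> (\<forall>i\<in>I. cs i = 0)"
    using assms(1) unfolding indep_def .
  have "(\<Sum>k\<in>I. sc (?cs k) (w k)) = 0 \<longrightarrow> (\<forall>k\<in>I. ?cs k = 0)" using h by (rule spec)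
  then have "\<forall>k\<in>I. ?cs k = 0" using z by (rule mp)
  then show ?thesis using assms(3,4,5) by force
qed

end

interpretation pv: vs "\<lambda>c (x :: ('a::field) poly \<times> 'a poly). (smult c (fst x), smult c (snd x))"
  by unfold_locales (auto simp: smult_add_right smult_add_left)

interpretation sv: vs "smult :: ('a::field) \<Rightarrow> 'a poly \<Rightarrow> 'a poly"
  by unfold_locales (auto simp: smult_add_right smult_add_left)


(* ===== part P8 ===== *)


lemma echelon:
  assumes sub: "poly_subspace (V :: ('a::field) poly set)"
  shows "\<exists>Ob v. Ob \<subseteq> {..<k} \<and> (\<forall>b\<in>Ob. v b \<in> V \<and> (\<forall>b'\<in>Ob. coeff (v b) b' = (if b = b' then 1 else 0)))
     \<and> (\<forall>p\<in>V. \<forall>j<k. j \<notin> Ob \<longrightarrow> coeff p j = (\<Sum>b\<in>Ob. coeff p b * coeff (v b) j))"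
proof (induction k)
  case 0
  show ?case by (rule exI[of _ "{}"]) auto
next
  case (Suc k)
  then obtain Ob v where Ob: "Ob \<subseteq> {..<k}" and vV: "\<forall>b\<in>Ob. v b \<in> V"
    and piv: "\<forall>b\<in>Ob. \<forall>b'\<in>Ob. coeff (v b) b' = (if b = b' then 1 else 0)"
    and ech: "\<forall>p\<in>V. \<forall>j<k. j \<notin> Ob \<longrightarrow> coeff p j = (\<Sum>b\<in>Ob. coeff p b * coeff (v b) j)"
    by blast
  have finOb: "finite Ob" using Ob finite_subset by blast
  have kOb: "k \<notin> Ob" using Ob by auto
  show ?case
  proof (cases "\<forall>p\<in>V. coeff p k = (\<Sum>b\<in>Ob. coeff p b * coeff (v b) k)")
    case True
    show ?thesis
      apply (rule exI[of _ Ob], rule exI[of _ v])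
      using Ob vV piv ech True by (auto simp: less_Suc_eq)
  next
    case False
    then obtain p0 where p0: "p0 \<in> V" "coeff p0 k \<noteq> (\<Sum>b\<in>Ob. coeff p0 b * coeff (v b) k)" by blast
    define r0 where "r0 = p0 - (\<Sum>b\<in>Ob. smult (coeff p0 b) (v b))"
    have r0V: "r0 \<in> V" unfolding r0_def
      by (intro subspace_diff[OF sub] p0 subspace_sum[OF sub finOb] subspace_smult[OF sub]) (use vV in auto)
    have cr0: "coeff r0 j = coeff p0 j - (\<Sum>b\<in>Ob. coeff p0 b * coeff (v b) j)" for j
      by (simp add: r0_def coeff_sum)
    define t where "t = coeff r0 k"
    have t0: "t \<noteq> 0" using p0 cr0 by (simp add: t_def)
    define r where "r = smult (inverse t) r0"
    have rV: "r \<in> V" unfolding r_def using r0V sub by (simp add: subspace_smult)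
    have rOb: "coeff r b' = 0" if "b' \<in> Ob" for b'
    proof -
      have "(\<Sum>b\<in>Ob. coeff p0 b * coeff (v b) b') = (\<Sum>b\<in>Ob. if b = b' then coeff p0 b else 0)"
        using that piv by (intro sum.cong) auto
      also have "\<dots> = coeff p0 b'" using that finOb by simp
      finally have "(\<Sum>b\<in>Ob. coeff p0 b * coeff (v b) b') = coeff p0 b'" .
      then show ?thesis by (simp add: r_def cr0)
    qed
    have rk: "coeff r k = 1" using t0 by (simp add: r_def t_def)
    have rj: "coeff r j = 0" if "j < k" "j \<notin> Ob" for j
      using ech p0 that by (simp add: r_def cr0)
    define v' where "v' b = (if b = k then r else v b - smult (coeff (v b) k) r)" for b
    let ?Ob = "insert k Ob"
    have 1: "?Ob \<subseteq> {..<Suc k}" using Ob by auto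
    have 2: "\<forall>b\<in>?Ob. v' b \<in> V"
      using vV rV sub by (auto simp: v'_def intro: subspace_diff subspace_smult)
    have 3: "\<forall>b\<in>?Ob. \<forall>b'\<in>?Ob. coeff (v' b) b' = (if b = b' then 1 else 0)"
      using piv rOb rk kOb by (auto simp: v'_def)
    have 4: "coeff p j = (\<Sum>b\<in>?Ob. coeff p b * coeff (v' b) j)" if p: "p \<in> V" and j: "j < Suc k" "j \<notin> ?Ob" for p j
    proof -
      have jk: "j < k" "j \<notin> Ob" using j by auto
      have "(\<Sum>b\<in>?Ob. coeff p b * coeff (v' b) j) = coeff p k * coeff r j + (\<Sum>b\<in>Ob. coeff p b * coeff (v' b) j)"
        using finOb kOb by (simp add: v'_def)
      also have "\<dots> = (\<Sum>b\<in>Ob. coeff p b * coeff (v b) j)"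
        using rj[OF jk] kOb by (simp add: v'_def, intro sum.cong) (auto simp: algebra_simps)
      also have "\<dots> = coeff p j" using ech p jk by simp
      finally show ?thesis by simp
    qed
    show ?thesis
      apply (rule exI[of _ ?Ob], rule exI[of _ v'])
      using 1 2 3 4 by blast
  qed
qed


(* ===== part P9 ===== *)


lemma pderiv_sum: "pderiv (sum f S) = (\<Sum>i\<in>S. pderiv (f i))"
  by (induction S rule: infinite_finite_induct) (auto simp: pderiv_add)

locale qech = qsetup n n' n'' V for n n' n'' :: nat and V :: "('a::field) poly set" +
  fixes Ob :: "nat set" and vb :: "nat \<Rightarrow> 'a poly"
  assumes Ob_sub: "Ob \<subseteq> {..<min n' n''}"
    and vbV: "\<forall>b\<in>Ob. vb b \<in> V"
    and piv: "\<forall>b\<in>Ob. \<forall>b'\<in>Ob. coeff (vb b) b' = (if b = b' then 1 else 0)"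
    and ech: "\<forall>p\<in>V. \<forall>j<min n' n''. j \<notin> Ob \<longrightarrow> coeff p j = (\<Sum>b\<in>Ob. coeff p b * coeff (vb b) j)"
begin

lemma finOb: "finite Ob" using Ob_sub finite_subset by blast

definition ell :: "nat \<Rightarrow> 'a poly \<Rightarrow> 'a" where
  "ell j p = coeff p j - (\<Sum>b\<in>Ob. coeff p b * coeff (vb b) j)"

lemma coeff_comb: "b' \<in> Ob \<Longrightarrow> coeff (\<Sum>b\<in>Ob. smult (c b) (vb b)) b' = c b'"
proof -
  assume b': "b' \<in> Ob"
  have "coeff (\<Sum>b\<in>Ob. smult (c b) (vb b)) b' = (\<Sum>b\<in>Ob. c b * coeff (vb b) b')" by (simp add: coeff_sum)
  also have "\<dots> = (\<Sum>b\<in>Ob. if b = b' then c b else 0)" using b' piv by (intro sum.cong) auto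
  also have "\<dots> = c b'" using b' finOb by simp
  finally show ?thesis .
qed

lemma low_zero_V: "p - (\<Sum>b\<in>Ob. smult (coeff p b) (vb b)) \<in> V \<and> p \<in> V"
  if h: "\<forall>j<m. j \<notin> Ob \<longrightarrow> ell j p = 0" for p
proof -
  let ?q = "p - (\<Sum>b\<in>Ob. smult (coeff p b) (vb b))"
  have "coeff ?q j = 0" if j: "j < m" for j
  proof (cases "j \<in> Ob")
    case True then show ?thesis by (simp add: coeff_comb)
  next
    case False then show ?thesis using h j by (simp add: ell_def coeff_sum)
  qed
  then have qV: "?q \<in> V" using bigV[of m ?q] by (simp add: monom_1_dvd_iff')
  have "(\<Sum>b\<in>Ob. smult (coeff p b) (vb b)) \<in> V"
    using vbV by (intro subspace_sum[OF sub finOb] subspace_smult[OF sub]) auto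
  then have "?q + (\<Sum>b\<in>Ob. smult (coeff p b) (vb b)) \<in> V" using qV subspace_add[OF sub] by blast
  then show ?thesis using qV by simp
qed

lemma V_crit: "(\<forall>j<m. j \<notin> Ob \<longrightarrow> ell j p = 0) \<Longrightarrow> p \<in> V"
  using low_zero_V by blast

lemma V_decomp: "p \<in> V \<Longrightarrow> monom 1 m dvd p - (\<Sum>b\<in>Ob. smult (coeff p b) (vb b))"
proof -
  assume p: "p \<in> V"
  have "coeff (p - (\<Sum>b\<in>Ob. smult (coeff p b) (vb b))) j = 0" if j: "j < m" for j
  proof (cases "j \<in> Ob")
    case True then show ?thesis by (simp add: coeff_comb)
  next
    case False then show ?thesis using ech p j by (simp add: coeff_sum)
  qed
  then show ?thesis by (simp add: monom_1_dvd_iff')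
qed

lemma theta_V:
  assumes hm: "of_nat m * coeff F 0 = 0" and hb: "\<forall>b\<in>Ob. A * vb b + F * pderiv (vb b) \<in> V"
  shows "\<forall>v\<in>V. A * v + F * pderiv v \<in> V"
proof
  fix v assume v: "v \<in> V"
  define s where "s = (\<Sum>b\<in>Ob. smult (coeff v b) (vb b))"
  define q where "q = v - s"
  have dq: "monom 1 m dvd q" unfolding q_def s_def using V_decomp[OF v] .
  have "A * q + F * pderiv q \<in> V"
    by (rule bigV[of m], intro dvd_add dvd_mult dq dvd_deriv hm) simp
  moreover have "A * s + F * pderiv s = (\<Sum>b\<in>Ob. smult (coeff v b) (A * vb b + F * pderiv (vb b)))"
    unfolding s_def by (simp add: pderiv_sum pderiv_smult sum_distrib_left sum.distrib smult_add_right)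
  moreover have "(\<Sum>b\<in>Ob. smult (coeff v b) (A * vb b + F * pderiv (vb b))) \<in> V"
    using hb by (intro subspace_sum[OF sub finOb] subspace_smult[OF sub]) auto
  ultimately have "(A * q + F * pderiv q) + (A * s + F * pderiv s) \<in> V" using subspace_add[OF sub] by metis
  moreover have "v = q + s" by (simp add: q_def)
  ultimately show "A * v + F * pderiv v \<in> V" by (simp add: pderiv_add algebra_simps)
qed

end


(* ===== part P10 ===== *)


context qech
begin

lemma indep_card: "indep_mod V m (card Ob)"
proof -
  let ?bs = "sorted_list_of_set Ob"
  have lbs: "length ?bs = card Ob" by simp
  have dbs: "distinct ?bs" by simp
  have sbs: "set ?bs = Ob" using finOb by simp
  have key: "cs ! i = 0" if lc: "length cs = card Ob" and dv: "monom 1 m dvd (\<Sum>i<card Ob. smult (cs ! i) (map vb ?bs ! i))"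
    and i: "i < card Ob" for cs :: "'a list" and i
  proof -
    have bi: "?bs ! i \<in> Ob" using i sbs lbs nth_mem by metis
    then have bm: "?bs ! i < m" using Ob_sub by auto
    have "coeff (\<Sum>l<card Ob. smult (cs ! l) (map vb ?bs ! l)) (?bs ! i) = (\<Sum>l<card Ob. cs ! l * coeff (vb (?bs ! l)) (?bs ! i))"
      by (simp add: coeff_sum)
    also have "\<dots> = (\<Sum>l<card Ob. if l = i then cs ! l else 0)"
    proof (intro sum.cong refl)
      fix l assume l: "l \<in> {..<card Ob}"
      have bl: "?bs ! l \<in> Ob" using l sbs lbs nth_mem by (metis lessThan_iff)
      have "(?bs ! l = ?bs ! i) = (l = i)" using l i dbs lbs by (simp add: nth_eq_iff_index_eq)
      then show "cs ! l * coeff (vb (?bs ! l)) (?bs ! i) = (if l = i then cs ! l else 0)"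
        using piv bl bi by auto
    qed
    also have "\<dots> = cs ! i" using i by simp
    finally have "coeff (\<Sum>l<card Ob. smult (cs ! l) (map vb ?bs ! l)) (?bs ! i) = cs ! i" .
    then show ?thesis using dv bm by (simp add: monom_1_dvd_iff')
  qed
  have "length (map vb ?bs) = card Ob" by simp
  moreover have "set (map vb ?bs) \<subseteq> V" using vbV sbs by auto
  ultimately show ?thesis unfolding indep_mod_def using key by blast
qed

lemma indep_le: "indep_mod V m r \<Longrightarrow> r \<le> card Ob"
proof (rule ccontr)
  assume im: "indep_mod V m r" and gt: "\<not> r \<le> card Ob"
  then obtain ps where lp: "length ps = r" and pV: "set ps \<subseteq> V" and
    ind: "\<forall>cs::'a list. length cs = r \<longrightarrow> monom 1 m dvd (\<Sum>i<r. smult (cs ! i) (ps ! i)) \<longrightarrow> (\<forall>i<r. cs ! i = 0)"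
    unfolding indep_mod_def by blast
  let ?P = "\<lambda>u::'a poly. \<forall>i\<ge>r. coeff u i = 0"
  let ?Ls = "map (\<lambda>b u. \<Sum>i<r. coeff u i * coeff (ps ! i) b) (sorted_list_of_set Ob)"
  have cl: "sv.closed ?P" unfolding sv.closed_def by simp
  have lin: "\<forall>L\<in>set ?Ls. sv.lin L"
    unfolding sv.lin_def by (auto simp: sum.distrib distrib_right sum_distrib_left mult.assoc)
  have ind0: "sv.indep (\<lambda>i. monom 1 i :: 'a poly) {..<r}"
    unfolding sv.indep_def
  proof (intro allI impI ballI)
    fix cs i assume z: "(\<Sum>i<r. smult (cs i) (monom 1 i)) = (0::'a poly)" and i: "i \<in> {..<r}"
    have "coeff (\<Sum>l<r. smult (cs l) (monom 1 l)) i = (\<Sum>l<r. if l = i then cs l else 0)"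
      by (simp add: coeff_sum coeff_monom if_distrib[of "\<lambda>x. _ * x"] cong: if_cong)
    also have "\<dots> = cs i" using i by simp
    finally show "cs i = 0" using z by simp
  qed
  have P0: "\<forall>i\<in>{..<r}. ?P (monom 1 i :: 'a poly)" by (simp add: coeff_monom)
  from sv.LA_list[OF _ ind0 P0 cl lin] obtain I' :: "nat set" and w' :: "nat \<Rightarrow> 'a poly" where
    r': "finite I'" "card {..<r} \<le> card I' + length ?Ls" "sv.indep w' I'"
      "\<forall>i\<in>I'. ?P (w' i) \<and> (\<forall>L\<in>set ?Ls. L (w' i) = 0)" by blast
  have "card I' \<noteq> 0" using r'(2) gt finOb by simp
  then have "I' \<noteq> {}" by auto
  then obtain i where i: "i \<in> I'" by blast
  define u where "u = w' i"
  have uP: "?P u" and uL: "\<forall>L\<in>set ?Ls. L u = 0" using r'(4) i by (auto simp: u_def)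
  have u0: "u \<noteq> 0"
  proof
    assume "u = 0"
    then have "smult 1 (w' i) = 0" by (simp add: u_def)
    from sv.indep_one[OF r'(3) r'(1) i this] show False by simp
  qed
  define cs where "cs = map (coeff u) [0..<r]"
  have lcs: "length cs = r" by (simp add: cs_def)
  have csi: "cs ! l = coeff u l" if "l < r" for l using that by (simp add: cs_def)
  define q where "q = (\<Sum>l<r. smult (cs ! l) (ps ! l))"
  have qV: "q \<in> V" unfolding q_def
    using pV lp by (intro subspace_sum[OF sub] subspace_smult[OF sub]) auto
  have qb: "coeff q b = 0" if b: "b \<in> Ob" for b
  proof -
    have "(\<lambda>u. \<Sum>i<r. coeff u i * coeff (ps ! i) b) \<in> set ?Ls" using b finOb by simp
    from uL this have "(\<lambda>u. \<Sum>i<r. coeff u i * coeff (ps ! i) b) u = 0" by (rule bspec)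
    then have "(\<Sum>i<r. coeff u i * coeff (ps ! i) b) = 0" by simp
    then show ?thesis by (simp add: q_def coeff_sum csi)
  qed
  have "coeff q j = 0" if j: "j < m" for j
  proof (cases "j \<in> Ob")
    case True then show ?thesis using qb by simp
  next
    case False then show ?thesis using ech qV j qb by simp
  qed
  then have "monom 1 m dvd q" by (simp add: monom_1_dvd_iff')
  then have "\<forall>l<r. cs ! l = 0" using ind[rule_format, OF lcs] unfolding q_def by blast
  then have "coeff u l = 0" for l using uP csi by (cases "l < r") auto
  then have "u = 0" by (intro poly_eqI) simp
  then show False using u0 by simp
qed

lemma quot_dim_eq: "quot_dim V m = card Ob"
  unfolding quot_dim_def by (rule Greatest_equality) (use indep_card indep_le in auto)

end


(* ===== part P11 ===== *)


context qech
begin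

definition Pp :: "nat \<Rightarrow> 'a poly \<times> 'a poly \<Rightarrow> bool" where
  "Pp c x \<longleftrightarrow> coeff (fst x) 0 = 0 \<and> (\<forall>j\<ge>m. coeff (fst x) j = 0) \<and> (\<forall>j\<ge>m. coeff (snd x) j = 0)
      \<and> (c = 0 \<longrightarrow> coeff (snd x) 0 = 0)"

lemma ell_add: "ell j (p + q) = ell j p + ell j q"
  by (simp add: ell_def sum.distrib algebra_simps)
lemma ell_smult: "ell j (smult a p) = a * ell j p"
  by (simp add: ell_def sum_distrib_left algebra_simps)

lemma counting:
  assumes c1: "c \<le> 1" and cm: "c = 1 \<Longrightarrow> of_nat m = (0::'a)" and m1: "1 \<le> m"
    and dm: "card Ob * (m - card Ob) + 3 \<le> 2 * m"
  shows "\<exists>(I' :: nat set) (wv :: nat \<Rightarrow> 'a poly \<times> 'a poly). finite I' \<and> c + 1 \<le> card I' \<and> pv.indep wv I' \<and>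
     (\<forall>i\<in>I'. Pp c (wv i) \<and> (\<forall>v\<in>V. fst (wv i) * v + snd (wv i) * pderiv v \<in> V))"
proof -
  define I0 where "I0 = {1..<m} \<union> {m+1-c..<2*m}"
  define w0 :: "nat \<Rightarrow> 'a poly \<times> 'a poly" where "w0 i = (if i < m then (monom 1 i, 0) else (0, monom 1 (i - m)))" for i
  have finI0: "finite I0" by (simp add: I0_def)
  have cardI0: "card I0 = 2 * m - 2 + c"
  proof -
    have "card I0 = card {1..<m} + card {m+1-c..<2*m}"
      unfolding I0_def by (rule card_Un_disjoint) (use c1 in auto)
    then show ?thesis using c1 m1 by simp
  qed
  have ind0: "pv.indep w0 I0"
    unfolding pv.indep_def
  proof (intro allI impI ballI)
    fix cs i assume z: "(\<Sum>i\<in>I0. (smult (cs i) (fst (w0 i)), smult (cs i) (snd (w0 i)))) = 0" and i: "i \<in> I0"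
    have zf: "(\<Sum>i\<in>I0. smult (cs i) (fst (w0 i))) = 0" using arg_cong[OF z, of fst] by (simp add: fst_sum)
    have zs: "(\<Sum>i\<in>I0. smult (cs i) (snd (w0 i))) = 0" using arg_cong[OF z, of snd] by (simp add: snd_sum)
    show "cs i = 0"
    proof (cases "i < m")
      case True
      have "coeff (\<Sum>l\<in>I0. smult (cs l) (fst (w0 l))) i = (\<Sum>l\<in>I0. if l = i then cs l else 0)"
        unfolding coeff_sum using True by (intro sum.cong) (auto simp: w0_def coeff_monom)
      also have "\<dots> = cs i" using i finI0 by simp
      finally show ?thesis using zf by simp
    next
      case False
      have "coeff (\<Sum>l\<in>I0. smult (cs l) (snd (w0 l))) (i - m) = (\<Sum>l\<in>I0. if l = i then cs l else 0)"
        unfolding coeff_sum using False by (intro sum.cong) (auto simp: w0_def coeff_monom)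
      also have "\<dots> = cs i" using i finI0 by simp
      finally show ?thesis using zs by simp
    qed
  qed
  have P0: "\<forall>i\<in>I0. Pp c (w0 i)"
    unfolding I0_def Pp_def w0_def using c1 m1 by (auto simp: coeff_monom)
  have clP: "pv.closed (Pp c)"
    unfolding pv.closed_def Pp_def by auto
  define bs where "bs = sorted_list_of_set Ob"
  define js where "js = sorted_list_of_set ({..<m} - Ob)"
  define Ls where "Ls = concat (map (\<lambda>b. map (\<lambda>j (x :: 'a poly \<times> 'a poly). ell j (fst x * vb b + snd x * pderiv (vb b))) js) bs)"
  have lenLs: "length Ls = card Ob * (m - card Ob)"
  proof -
    have "length Ls = length bs * length js" unfolding Ls_def
      by (simp add: length_concat comp_def sum_list_triv)
    also have "length js = m - card Ob"
      unfolding js_def using Ob_sub by (simp add: card_Diff_subset finOb)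
    finally show ?thesis by (simp add: bs_def)
  qed
  have linLs: "\<forall>L\<in>set Ls. pv.lin L"
    unfolding Ls_def pv.lin_def by (auto simp: ell_add ell_smult algebra_simps)
  from pv.LA_list[OF finI0 ind0 P0 clP linLs] obtain I' :: "nat set" and wv :: "nat \<Rightarrow> 'a poly \<times> 'a poly" where
    r: "finite I'" "card I0 \<le> card I' + length Ls" "pv.indep wv I'" "\<forall>i\<in>I'. Pp c (wv i) \<and> (\<forall>L\<in>set Ls. L (wv i) = 0)"
    by blast
  have cI': "c + 1 \<le> card I'"
  proof -
    define K where "K = card Ob * (m - card Ob)"
    define M where "M = m"
    have "card I0 \<le> card I' + K" "card I0 = 2 * M - 2 + c" "K + 3 \<le> 2 * M"
      using r(2) cardI0 lenLs dm unfolding K_def M_def by auto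
    then show ?thesis by linarith
  qed
  have good: "\<forall>v\<in>V. fst (wv i) * v + snd (wv i) * pderiv v \<in> V" if i: "i \<in> I'" for i
  proof (rule theta_V)
    show "of_nat m * coeff (snd (wv i)) 0 = 0"
      using r(4) i cm c1 unfolding Pp_def by (cases c) auto
    show "\<forall>b\<in>Ob. fst (wv i) * vb b + snd (wv i) * pderiv (vb b) \<in> V"
    proof
      fix b assume b: "b \<in> Ob"
      show "fst (wv i) * vb b + snd (wv i) * pderiv (vb b) \<in> V"
      proof (rule V_crit, intro allI impI)
        fix j assume j: "j < m" "j \<notin> Ob"
        have "(\<lambda>x :: 'a poly \<times> 'a poly. ell j (fst x * vb b + snd x * pderiv (vb b))) \<in> set Ls"
          unfolding Ls_def js_def bs_def using b j finOb
          by (simp, intro bexI[of _ b] image_eqI[of _ _ j]) auto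
        from r(4) i this show "ell j (fst (wv i) * vb b + snd (wv i) * pderiv (vb b)) = 0" by auto
      qed
    qed
  qed
  show ?thesis
    apply (rule exI[of _ I'], rule exI[of _ wv])
    using r cI' good by auto
qed

end


(* ===== part P12 ===== *)


lemma arith_cond:
  fixes d m :: nat
  assumes dm: "d \<le> m" and h: "(d \<le> 2 \<and> 2 \<le> m) \<or> (d > 2 \<and> real d + 2 / (real d - 2) > real m - 2)"
  shows "2 \<le> m \<and> d * (m - d) + 3 \<le> 2 * m"
  using h
proof
  assume a: "d \<le> 2 \<and> 2 \<le> m"
  then have "d = 0 \<or> d = 1 \<or> d = 2" by auto
  then show ?thesis using a by (auto simp: algebra_simps)
next
  assume a: "d > 2 \<and> real d + 2 / (real d - 2) > real m - 2"
  then have d2: "real d - 2 > 0" by simp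
  have "(real m - 2) * (real d - 2) < (real d + 2 / (real d - 2)) * (real d - 2)"
    using a d2 by (intro mult_strict_right_mono) auto
  also have "\<dots> = real d * (real d - 2) + 2" using d2 by (simp add: field_simps)
  finally have ineq: "(real m - 2) * (real d - 2) < real d * (real d - 2) + 2" .
  have e: "real (d * (m - d)) = real d * real m - real d * real d" using dm by (simp add: of_nat_diff algebra_simps)
  have "real d * real m - real d * real d < 2 * real m - 2"
    using ineq by (simp add: algebra_simps)
  then have "real (d * (m - d)) < real (2 * m - 2)" using e a dm by (simp add: of_nat_diff)
  then have "d * (m - d) < 2 * m - 2" by (simp only: of_nat_less_iff)
  then show ?thesis using a dm by simp
qed

context qsetup
begin

lemma dprime_of:
  assumes A0: "coeff A 0 = 0" and Am: "\<forall>j\<ge>m. coeff A j = 0" and Fm: "\<forall>j\<ge>m. coeff F j = 0" and F0: "coeff F 0 = 0"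
    and good: "\<forall>v\<in>V. A*v + F*pderiv v \<in> V" and nz: "(A, F) \<noteq> (0, 0)"
  shows "Dprime_nonzero V m"
  unfolding Dprime_nonzero_def
proof (intro exI conjI)
  show "coeff F 0 = 0" by (rule F0)
  show "\<forall>v\<in>V. A * v + F * pderiv v \<in> V" by (rule good)
  show "\<not> ((\<exists>c. monom 1 m dvd A - [:c:]) \<and> monom 1 m dvd F)"
  proof
    assume "(\<exists>c. monom 1 m dvd A - [:c:]) \<and> monom 1 m dvd F"
    then obtain c where dA: "monom 1 m dvd A - [:c:]" and dF: "monom 1 m dvd F" by blast
    have "coeff F j = 0" for j using dF Fm by (cases "j < m") (auto simp: monom_1_dvd_iff')
    then have "F = 0" by (intro poly_eqI) simp
    have "coeff A j = 0" for j
    proof (cases "j < m")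
      case True
      then show ?thesis using dA A0 by (cases j) (auto simp: monom_1_dvd_iff')
    next
      case False then have "m \<le> j" by (simp only: not_less)
      then show ?thesis using Am by blast
    qed
    then have "A = 0" by (intro poly_eqI) simp
    then show False using nz \<open>F = 0\<close> by simp
  qed
qed

end


(* ===== part P13 ===== *)


context qech
begin

lemma main_qech:
  assumes c1: "c \<le> (1::nat)" and cn: "c = 1 \<Longrightarrow> of_nat n = (0::'a) \<and> of_nat n' = (0::'a) \<and> of_nat n'' = (0::'a)"
    and dmi: "card Ob * (m - card Ob) + 3 \<le> 2 * m" and m2: "2 \<le> m"
  shows "Dprime_nonzero V m \<and> hh1_dim_gt I (n - m + c) \<and> hh1_nonzero I"
proof -
  have mn: "m \<le> n" using n'n by linarith
  have cm: "of_nat m = (0::'a)" if "c = 1" using cn[OF that] by (simp add: min_def)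
  have m1: "1 \<le> m" using m2 by simp
  from counting[OF c1 cm m1 dmi] obtain I' :: "nat set" and wv :: "nat \<Rightarrow> 'a poly \<times> 'a poly" where
    fin: "finite I'" and cI: "c + 1 \<le> card I'" and ind: "pv.indep wv I'"
    and PI: "\<forall>i\<in>I'. Pp c (wv i) \<and> (\<forall>v\<in>V. fst (wv i) * v + snd (wv i) * pderiv v \<in> V)"
    by blast
  have "I' \<noteq> {}" using cI by auto
  then obtain i0 where i0: "i0 \<in> I'" by blast
  define i1 where "i1 = (SOME i. i \<in> I' \<and> i \<noteq> i0)"
  have i1: "i1 \<in> I' \<and> i1 \<noteq> i0" if "c = 1"
  proof -
    have "card (I' - {i0}) \<ge> 1" using cI that fin i0 by (simp add: card_Diff_singleton)
    then have "I' - {i0} \<noteq> {}" by (cases "I' - {i0} = {}") simp_all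
    then have "\<exists>i. i \<in> I' \<and> i \<noteq> i0" by blast
    then show ?thesis unfolding i1_def by (rule someI_ex)
  qed
  define sel where "sel k = (if k = 0 then i0 else i1)" for k :: nat
  have sel_in: "sel k \<in> I'" if "k \<le> c" for k
    using that c1 i0 i1 by (cases k) (auto simp: sel_def)
  define N where "N = n - m + c"
  define As where "As k = (if k \<le> c then fst (wv (sel k)) else 0)" for k
  define Fs where "Fs k = (if k \<le> c then snd (wv (sel k)) else monom 1 (m + k - c - 1))" for k
  have Psel: "Pp c (wv (sel k))" and Gsel: "\<forall>v\<in>V. fst (wv (sel k)) * v + snd (wv (sel k)) * pderiv v \<in> V"
    if "k \<le> c" for k using PI sel_in[OF that] by auto
  have propA: "coeff (As k) 0 = 0 \<and> (\<forall>j\<ge>m. coeff (As k) j = 0)" for k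
    using Psel unfolding As_def Pp_def by auto
  have propF: "\<forall>j\<ge>n. coeff (Fs k) j = 0" if "k \<le> N" for k
  proof (cases "k \<le> c")
    case True then show ?thesis using Psel[OF True] mn unfolding Fs_def Pp_def by auto
  next
    case False then show ?thesis using that mn unfolding Fs_def N_def by (auto simp: coeff_monom)
  qed
  have propF0: "of_nat n * coeff (Fs k) 0 = 0 \<and> of_nat n' * coeff (Fs k) 0 = 0 \<and> of_nat n'' * coeff (Fs k) 0 = 0" for k
  proof (cases "k \<le> c")
    case True
    show ?thesis
    proof (cases "c = 0")
      case True then show ?thesis using Psel[of k] \<open>k \<le> c\<close> unfolding Fs_def Pp_def by auto
    next
      case False then have "c = 1" using c1 by simp
      then show ?thesis using cn by simp
    qed
  next
    case False then show ?thesis using m2 unfolding Fs_def by (auto simp: coeff_monom)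
  qed
  have propG: "\<forall>v\<in>V. As k * v + Fs k * pderiv v \<in> V" for k
  proof (cases "k \<le> c")
    case True then show ?thesis using Gsel unfolding As_def Fs_def by simp
  next
    case False
    show ?thesis
    proof
      fix v assume "v \<in> V"
      have "m + k - c - 1 = m + (k - c - 1)" using False by simp
      then have "monom 1 (m + k - c - 1) = monom 1 m * monom (1::'a) (k - c - 1)" by (simp add: mult_monom)
      then have "monom 1 m dvd monom 1 (m + k - c - 1) * pderiv v" by simp
      then have "monom 1 (m + k - c - 1) * pderiv v \<in> V" using bigV by blast
      then show "As k * v + Fs k * pderiv v \<in> V" using False unfolding As_def Fs_def by simp
    qed
  qed
  have der: "is_lam_der I (Dd (As k) (Fs k))" for k
    using Dd_der[OF propG] propF0 by blast
  have nz0: "wv i0 \<noteq> 0"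
  proof
    assume "wv i0 = 0"
    then have "(smult 1 (fst (wv i0)), smult 1 (snd (wv i0))) = 0" by (simp add: zero_prod_def)
    from pv.indep_one[OF ind fin i0 this] show False by simp
  qed
  have sel0: "sel 0 = i0" by (simp add: sel_def)
  \<comment> \<open>HH^1 nonzero\<close>
  have nonz: "hh1_nonzero I"
    unfolding hh1_nonzero_def
  proof (intro exI conjI)
    show "is_lam_der I (Dd (As 0) (Fs 0))" by (rule der)
    show "\<not> is_lam_inner I (Dd (As 0) (Fs 0))"
    proof
      assume "is_lam_inner I (Dd (As 0) (Fs 0))"
      from inner_zero[OF _ _ _ this] propA propF[of 0]
      have "As 0 = 0 \<and> Fs 0 = 0" by simp
      then have "wv i0 = 0" by (simp add: As_def Fs_def sel0 prod_eq_iff)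
      then show False using nz0 by simp
    qed
  qed
  \<comment> \<open>dimension bound\<close>
  have dimgt: "hh1_dim_gt I N"
    unfolding hh1_dim_gt_def
  proof (intro exI conjI allI impI)
    fix k :: nat assume "k \<le> N" show "is_lam_der I (Dd (As k) (Fs k))" by (rule der)
  next
    fix cs :: "nat \<Rightarrow> 'a" and k assume inn: "is_lam_inner I (\<lambda>x p. \<Sum>i\<le>N. cs i * Dd (As i) (Fs i) x p)"
      and kN: "k \<le> N"
    define As' where "As' = (\<Sum>i\<le>N. smult (cs i) (As i))"
    define Fs' where "Fs' = (\<Sum>i\<le>N. smult (cs i) (Fs i))"
    have "is_lam_inner I (Dd As' Fs')" using inn unfolding As'_def Fs'_def by (simp add: Dd_sum)
    moreover have "coeff As' 0 = 0" "\<forall>j\<ge>m. coeff As' j = 0" using propA by (auto simp: As'_def coeff_sum)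
    moreover have "\<forall>j\<ge>n. coeff Fs' j = 0" using propF by (auto simp: Fs'_def coeff_sum)
    ultimately have z: "As' = 0 \<and> Fs' = 0" using inner_zero by blast
    have big: "cs l = 0" if l: "c < l" "l \<le> N" for l
    proof -
      have "coeff Fs' (m + l - c - 1) = (\<Sum>i\<le>N. if i = l then cs i else 0)"
        unfolding Fs'_def coeff_sum
      proof (intro sum.cong refl)
        fix i assume i: "i \<in> {..N}"
        show "coeff (smult (cs i) (Fs i)) (m + l - c - 1) = (if i = l then cs i else 0)"
        proof (cases "i \<le> c")
          case True
          then have "coeff (snd (wv (sel i))) (m + l - c - 1) = 0" using Psel[OF True] l unfolding Pp_def by auto
          then show ?thesis using True l by (simp add: Fs_def)
        next
          case False then show ?thesis using l by (auto simp: Fs_def coeff_monom)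
        qed
      qed
      also have "\<dots> = cs l" using l by simp
      finally show ?thesis using z by simp
    qed
    have sumA: "(\<Sum>i\<le>c. smult (cs i) (fst (wv (sel i)))) = 0"
    proof -
      have "(\<Sum>i\<le>c. smult (cs i) (fst (wv (sel i)))) = (\<Sum>i\<le>c. smult (cs i) (As i))"
        by (intro sum.cong) (auto simp: As_def)
      also have "\<dots> = As'" unfolding As'_def N_def
        by (rule sum.mono_neutral_left) (auto simp: As_def)
      finally show ?thesis using z by simp
    qed
    have sumF: "(\<Sum>i\<le>c. smult (cs i) (snd (wv (sel i)))) = 0"
    proof -
      have "(\<Sum>i\<le>c. smult (cs i) (snd (wv (sel i)))) = (\<Sum>i\<le>c. smult (cs i) (Fs i))"
        by (intro sum.cong) (auto simp: Fs_def)
      also have "\<dots> = Fs'" unfolding Fs'_def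
        by (rule sum.mono_neutral_left) (use big N_def in auto)
      finally show ?thesis using z by simp
    qed
    have small: "cs l = 0" if l: "l \<le> c" for l
    proof (cases "c = 0")
      case True
      then have "(smult (cs 0) (fst (wv i0)), smult (cs 0) (snd (wv i0))) = 0"
        using sumA sumF by (simp add: sel0 zero_prod_def)
      from pv.indep_one[OF ind fin i0 this] show ?thesis using l True by simp
    next
      case False
      then have c1': "c = 1" using c1 by simp
      have si: "sel 1 = i1" by (simp add: sel_def)
      have "(smult (cs 0) (fst (wv i0)), smult (cs 0) (snd (wv i0))) + (smult (cs 1) (fst (wv i1)), smult (cs 1) (snd (wv i1))) = 0"
        using sumA sumF c1' by (simp add: sel_def zero_prod_def)
      from pv.indep_two[OF ind fin i0 _ _ this] i1[OF c1'] have "cs 0 = 0 \<and> cs 1 = 0" by auto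
      then show ?thesis using l c1' by (cases l) auto
    qed
    show "cs k = 0" using small big kN by (cases "k \<le> c") auto
  qed
  \<comment> \<open>D' nonzero\<close>
  have dpr: "Dprime_nonzero V m"
  proof (cases "coeff (snd (wv i0)) 0 = 0")
    case True
    have P: "Pp c (wv i0)" using PI i0 by blast
    show ?thesis
      by (rule dprime_of[of "fst (wv i0)" "snd (wv i0)"]) (use P True PI i0 nz0 in \<open>auto simp: Pp_def prod_eq_iff\<close>)
  next
    case False
    have c1': "c = 1"
    proof (rule ccontr)
      assume "c \<noteq> 1" then have "c = 0" using c1 by simp
      then show False using PI i0 False unfolding Pp_def by auto
    qed
    note ii = i1[OF c1']
    define f0 where "f0 = coeff (snd (wv i0)) 0"
    define f1 where "f1 = coeff (snd (wv i1)) 0"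
    define A where "A = smult f1 (fst (wv i0)) - smult f0 (fst (wv i1))"
    define F where "F = smult f1 (snd (wv i0)) - smult f0 (snd (wv i1))"
    have P0: "Pp c (wv i0)" and P1: "Pp c (wv i1)" using PI i0 ii by auto
    have G0: "\<forall>v\<in>V. fst (wv i0) * v + snd (wv i0) * pderiv v \<in> V"
      and G1: "\<forall>v\<in>V. fst (wv i1) * v + snd (wv i1) * pderiv v \<in> V" using PI i0 ii by auto
    have good: "\<forall>v\<in>V. A * v + F * pderiv v \<in> V"
    proof
      fix v assume v: "v \<in> V"
      have "A * v + F * pderiv v = smult f1 (fst (wv i0) * v + snd (wv i0) * pderiv v) - smult f0 (fst (wv i1) * v + snd (wv i1) * pderiv v)"
        by (simp add: A_def F_def algebra_simps smult_add_right)
      also have "\<dots> \<in> V" using G0 G1 v by (intro subspace_diff[OF sub] subspace_smult[OF sub]) auto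
      finally show "A * v + F * pderiv v \<in> V" .
    qed
    have nz: "(A, F) \<noteq> (0, 0)"
    proof
      assume "(A, F) = (0, 0)"
      then have "(smult f1 (fst (wv i0)), smult f1 (snd (wv i0))) + (smult (- f0) (fst (wv i1)), smult (- f0) (snd (wv i1))) = 0"
        by (simp add: A_def F_def zero_prod_def)
      from pv.indep_two[OF ind fin i0 _ _ this] ii have "- f0 = 0" by auto
      then show False using False by (simp add: f0_def)
    qed
    show ?thesis
      by (rule dprime_of[OF _ _ _ _ good nz]) (use P0 P1 in \<open>auto simp: A_def F_def Pp_def f0_def f1_def\<close>)
  qed
  show ?thesis using dpr dimgt nonz by (simp add: N_def)
qed

end


(* ===== part P14 ===== *)


lemma of_nat_dvd_zero: "(of_nat g :: 'a::field) = 0 \<Longrightarrow> g dvd k \<Longrightarrow> (of_nat k :: 'a) = 0"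
  by (auto elim!: dvdE)

theorem mainTheorem10:
  fixes V :: "('a::field) poly set" and n n' n'' :: nat
  defines "m \<equiv> min n' n''"
  defines "d \<equiv> quot_dim V m"
  defines "c \<equiv> (if of_nat (gcd n (gcd n' n'')) = (0::'a) then 1 else 0 :: nat)"
  assumes "2 \<le> n" and "1 \<le> n'" and "n' \<le> n" and "1 \<le> n''" and "n'' \<le> n"
    and "poly_subspace V" and "\<forall>p. monom 1 m dvd p \<longrightarrow> p \<in> V"
    and "(d \<le> 2 \<and> 2 \<le> m) \<or> (d > 2 \<and> real d + 2 / (real d - 2) > real m - 2)"
  shows "Dprime_nonzero V m \<and> hh1_dim_gt (I_ideal n n' n'' V) (n - m + c)
         \<and> hh1_nonzero (I_ideal n n' n'' V)"
proof -
  have mdef: "m = min n' n''" using assms(1) by simp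
  have ddef: "d = quot_dim V m" using assms(2) by simp
  have cdef: "c = (if of_nat (gcd n (gcd n' n'')) = (0::'a) then 1 else 0 :: nat)" using assms(3) by simp
  have sub: "poly_subspace V" by (rule assms(9))
  interpret Q: qsetup n n' n'' V
    by unfold_locales (use assms(6,8,9,10) mdef in auto)
  obtain Ob :: "nat set" and vb :: "nat \<Rightarrow> 'a poly" where
    e1: "Ob \<subseteq> {..<min n' n''}" and e2: "\<forall>b\<in>Ob. vb b \<in> V"
    and e3: "\<forall>b\<in>Ob. \<forall>b'\<in>Ob. coeff (vb b) b' = (if b = b' then 1 else 0)"
    and e4: "\<forall>p\<in>V. \<forall>j<min n' n''. j \<notin> Ob \<longrightarrow> coeff p j = (\<Sum>b\<in>Ob. coeff p b * coeff (vb b) j)"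
    using echelon[OF sub, of "min n' n''"] by blast
  interpret E: qech n n' n'' V Ob vb
    by unfold_locales (use e1 e2 e3 e4 in auto)
  have dOb: "d = card Ob" using ddef mdef E.quot_dim_eq by simp
  have cardle: "card Ob \<le> m" using e1 card_mono[of "{..<min n' n''}" Ob] mdef by simp
  have h11: "(card Ob \<le> 2 \<and> 2 \<le> m) \<or> (card Ob > 2 \<and> real (card Ob) + 2 / (real (card Ob) - 2) > real m - 2)"
    using assms(11) unfolding dOb .
  have ar: "2 \<le> m \<and> card Ob * (m - card Ob) + 3 \<le> 2 * m" by (rule arith_cond[OF cardle h11])
  have c1: "c \<le> 1"
  proof (cases "of_nat (gcd n (gcd n' n'')) = (0::'a)")
    case True then have "c = 1" unfolding cdef by (rule if_P)
    then show ?thesis by simp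
  next
    case False then have "c = 0" unfolding cdef by (rule if_not_P)
    then show ?thesis by simp
  qed
  have cn: "of_nat n = (0::'a) \<and> of_nat n' = (0::'a) \<and> of_nat n'' = (0::'a)" if "c = 1"
  proof -
    have g: "of_nat (gcd n (gcd n' n'')) = (0::'a)"
    proof (rule ccontr)
      assume "of_nat (gcd n (gcd n' n'')) \<noteq> (0::'a)"
      then have "c = 0" unfolding cdef by (rule if_not_P)
      then show False using that by simp
    qed
    have "gcd n (gcd n' n'') dvd n" by (rule gcd_dvd1)
    moreover have "gcd n (gcd n' n'') dvd n'" by (rule dvd_trans[OF gcd_dvd2 gcd_dvd1])
    moreover have "gcd n (gcd n' n'') dvd n''" by (rule dvd_trans[OF gcd_dvd2 gcd_dvd2])
    ultimately show ?thesis using of_nat_dvd_zero[OF g] by blast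
  qed
  have ar1: "2 \<le> min n' n''" using ar unfolding mdef by blast
  have ar2: "card Ob * (min n' n'' - card Ob) + 3 \<le> 2 * min n' n''" using ar unfolding mdef by blast
  show ?thesis unfolding mdef by (rule E.main_qech[OF c1 cn ar2 ar1])
qed


end
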